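(* Let $(\Omega,\mathcal F,\mathbb P)$ be nonatomic, $X$ a random vector in $\mathbb R^N$ and $Y$ a real random variable, with $\nu=\mathrm{Law}(X,Y)$ compactly supported, $m=\mathrm{Law}(X)$, $\nu=m\otimes\nu^x$ where $\nu^x$ is the conditional law of $Y$ given $X=x$, and $\mu$ the uniform measure on $[0,1]$. Let $F(x,y)=\mathbb P(Y\le y\mid X=x)$ and $Q(x,t)=\inf\{\alpha\in\mathbb R: F(x,\alpha)>t\}$. Assume that for $m$-a.e. $x$, $t\mapsto Q(x,t)$ is continuous and increasing, and that $\mathbb P(Y=\alpha+\beta\cdot X)=0$ for every $(\alpha,\beta)\in\mathbb R^{1+N}$. Consider $$(P_1)\qquad \max_{\theta\in I(\nu,\mu)}\int u\,y\ \theta(dx,dy,du),$$ where $I(\nu,\mu)$ is the set of probability measures $\theta$ on $\mathbb R^{N+1}\times[0,1]$ whose $(x,y)$-marginal is $\nu$ and whose $(x,u)$-marginal is $m\otimes\mu$, and $$(D_1)\qquad \inf\Big\{\int\varphi(x,u)\,m(dx)\mu(du)+\int\psi(x,y)\,\nu(dx,dy)\ :\ \varphi(x,u)+\psi(x,y)\ge uy\Big\}.$$ Let $(\varphi,\psi)$ solve $(D_1)$ with, for $m$-a.e. $x$, $\varphi(x,\cdot)$ and $\psi(x,\cdot)$ convex conjugate to each other: $\varphi(x,u)=\sup_y\{uy-\psi(x,y)\}$, $\psi(x,y)=\sup_{u\in[0,1]}\{uy-\varphi(x,u)\}$. Then for $m$-a.e. $x$, $Q(x,\cdot)=\partial_u\varphi(x,\cdot)$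 and $F(x,\cdot)=\partial_y\psi(x,\cdot)$. Moreover, if $\theta$ solves $(P_1)$, then there is a unique random variable $U$ such that $\mathrm{Law}(X,Y,U)=\theta$ (so $U$ is uniformly distributed on $[0,1]$ and independent of $X$); it is given by $U=F(X,Y)$ and satisfies $Y=\partial_u\varphi(X,U)=Q(X,U)$ almost surely. *)

theory Defs
  imports "HOL-Probability.Probability"
begin

definition nonatomic :: "'w measure \<Rightarrow> bool" where
  "nonatomic M \<longleftrightarrow> (\<forall>A\<in>sets M. 0 < emeasure M A \<longrightarrow>
     (\<exists>B\<in>sets M. B \<subseteq> A \<and> 0 < emeasure M B \<and> emeasure M B < emeasure M A))"

definition unif01 :: "real measure" where
  "unif01 = uniform_measure lborel {0..1}"

text \<open>Conditional distribution function and conditional quantile function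
  of the kernel K (K x = conditional law of Y given X = x).\<close>
definition condF :: "('a \<Rightarrow> real measure) \<Rightarrow> 'a \<Rightarrow> real \<Rightarrow> real" where
  "condF K x y = measure (K x) {..y}"

definition condQ :: "('a \<Rightarrow> real measure) \<Rightarrow> 'a \<Rightarrow> real \<Rightarrow> real" where
  "condQ K x t = Inf {\<alpha>. condF K x \<alpha> > t}"

definition primal_feasible ::
  "('a::euclidean_space \<times> real) measure \<Rightarrow> 'a measure \<Rightarrow> (('a \<times> real) \<times> real) measure \<Rightarrow> bool" where
  "primal_feasible \<nu> m \<theta> \<longleftrightarrow>
     prob_space \<theta> \<and> sets \<theta> = sets borel \<and>
     distr \<theta> borel fst = \<nu> \<and>
     distr \<theta> borel (\<lambda>((x, y), u). (x, u)) = m \<Otimes>\<^sub>M unif01"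

definition primal_value :: "(('a::euclidean_space \<times> real) \<times> real) measure \<Rightarrow> real" where
  "primal_value \<theta> = (\<integral>((x, y), u). u * y \<partial>\<theta>)"

definition primal_optimal ::
  "('a::euclidean_space \<times> real) measure \<Rightarrow> 'a measure \<Rightarrow> (('a \<times> real) \<times> real) measure \<Rightarrow> bool" where
  "primal_optimal \<nu> m \<theta> \<longleftrightarrow> primal_feasible \<nu> m \<theta> \<and>
     (\<forall>\<theta>'. primal_feasible \<nu> m \<theta>' \<longrightarrow> primal_value \<theta>' \<le> primal_value \<theta>)"

definition dual_feasible ::
  "('a::euclidean_space \<times> real) measure \<Rightarrow> 'a measure \<Rightarrow> ('a \<Rightarrow> real \<Rightarrow> real) \<Rightarrow> ('a \<Rightarrow> real \<Rightarrow> real) \<Rightarrow> bool" where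
  "dual_feasible \<nu> m \<phi> \<psi> \<longleftrightarrow>
     integrable (m \<Otimes>\<^sub>M unif01) (\<lambda>(x, u). \<phi> x u) \<and>
     integrable \<nu> (\<lambda>(x, y). \<psi> x y) \<and>
     (\<forall>x y u. u \<in> {0..1} \<longrightarrow> u * y \<le> \<phi> x u + \<psi> x y)"

definition dual_value ::
  "('a::euclidean_space \<times> real) measure \<Rightarrow> 'a measure \<Rightarrow> ('a \<Rightarrow> real \<Rightarrow> real) \<Rightarrow> ('a \<Rightarrow> real \<Rightarrow> real) \<Rightarrow> real" where
  "dual_value \<nu> m \<phi> \<psi> =
     (\<integral>(x, u). \<phi> x u \<partial>(m \<Otimes>\<^sub>M unif01)) + (\<integral>(x, y). \<psi> x y \<partial>\<nu>)"

definition dual_optimal ::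
  "('a::euclidean_space \<times> real) measure \<Rightarrow> 'a measure \<Rightarrow> ('a \<Rightarrow> real \<Rightarrow> real) \<Rightarrow> ('a \<Rightarrow> real \<Rightarrow> real) \<Rightarrow> bool" where
  "dual_optimal \<nu> m \<phi> \<psi> \<longleftrightarrow> dual_feasible \<nu> m \<phi> \<psi> \<and>
     (\<forall>\<phi>' \<psi>'. dual_feasible \<nu> m \<phi>' \<psi>' \<longrightarrow> dual_value \<nu> m \<phi> \<psi> \<le> dual_value \<nu> m \<phi>' \<psi>')"

end

theory Submission
  imports Defs
begin

lemma condF_facts:
  fixes K :: "'a \<Rightarrow> real measure"
  assumes P: "prob_space (K x)" and S: "sets (K x) = sets borel"
  shows condF_mono: "y \<le> z \<Longrightarrow> condF K x y \<le> condF K x z"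
    and condF_nonneg: "0 \<le> condF K x y"
    and condF_le1: "condF K x y \<le> 1"
    and condF_top: "(condF K x \<longlongrightarrow> 1) at_top"
    and condF_bot: "(condF K x \<longlongrightarrow> 0) at_bot"
    and condF_rc: "continuous (at_right y) (condF K x)"
proof -
  interpret real_distribution "K x" using P S by (simp add: real_distribution_def real_distribution_axioms_def)
  have e: "condF K x = cdf (K x)" by (simp add: fun_eq_iff condF_def cdf_def)
  show "y \<le> z \<Longrightarrow> condF K x y \<le> condF K x z" unfolding e by (rule cdf_nondecreasing)
  show "0 \<le> condF K x y" unfolding e by (rule cdf_nonneg)
  show "condF K x y \<le> 1" unfolding e by (rule cdf_bounded_prob)
  show "(condF K x \<longlongrightarrow> 1) at_top" unfolding e by (rule cdf_lim_at_top_prob)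
  show "(condF K x \<longlongrightarrow> 0) at_bot" unfolding e by (rule cdf_lim_at_bot)
  show "continuous (at_right y) (condF K x)" unfolding e by (rule cdf_is_right_cont)
qed

lemma condQ_basic:
  fixes K :: "'a \<Rightarrow> real measure"
  assumes P: "prob_space (K x)" and S: "sets (K x) = sets borel"
    and t: "0 < t" "t < 1"
  shows condQ_ne: "{\<alpha>. condF K x \<alpha> > t} \<noteq> {}"
    and condQ_bdd: "bdd_below {\<alpha>. condF K x \<alpha> > t}"
    and condQ_gt: "\<alpha> > condQ K x t \<Longrightarrow> condF K x \<alpha> > t"
    and condQ_lt: "\<alpha> < condQ K x t \<Longrightarrow> condF K x \<alpha> \<le> t"
    and condQ_F_ge: "condF K x (condQ K x t) \<ge> t"
proof -
  let ?F = "condF K x"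
  note mono = condF_mono[where K=K and x=x, OF P S]
  have "eventually (\<lambda>a. ?F a > t) at_top"
    using condF_top[where K=K and x=x, OF P S] t by (simp add: order_tendsto_iff)
  then obtain a where "?F a > t" by (auto simp: eventually_at_top_linorder)
  then show ne: "{\<alpha>. ?F \<alpha> > t} \<noteq> {}" by auto
  have "eventually (\<lambda>a. ?F a < t) at_bot"
    using condF_bot[where K=K and x=x, OF P S] t by (simp add: order_tendsto_iff)
  then obtain b where b: "\<And>c. c \<le> b \<Longrightarrow> ?F c < t" by (auto simp: eventually_at_bot_linorder)
  show bdd: "bdd_below {\<alpha>. ?F \<alpha> > t}"
  proof (rule bdd_belowI[of _ b])
    fix c assume "c \<in> {\<alpha>. ?F \<alpha> > t}"
    then show "b \<le> c" using b[of c] by (cases "c \<le> b") auto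
  qed
  show gt: "\<alpha> > condQ K x t \<Longrightarrow> ?F \<alpha> > t" for \<alpha>
  proof -
    assume "\<alpha> > condQ K x t"
    then obtain \<beta> where "\<beta> \<in> {\<alpha>. ?F \<alpha> > t}" "\<beta> < \<alpha>"
      using cInf_less_iff[OF ne bdd] unfolding condQ_def by blast
    then show ?thesis using mono[of \<beta> \<alpha>] by auto
  qed
  show "\<alpha> < condQ K x t \<Longrightarrow> ?F \<alpha> \<le> t" for \<alpha>
    using cInf_lower[OF _ bdd, of \<alpha>] unfolding condQ_def by (cases "?F \<alpha> > t") auto
  have "((?F \<longlongrightarrow> ?F (condQ K x t)) (at_right (condQ K x t)))"
    using condF_rc[where K=K and x=x, OF P S] by (simp add: continuous_within)
  moreover have "eventually (\<lambda>a. ?F a \<ge> t) (at_right (condQ K x t))"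
    using gt by (auto simp: eventually_at_right_field intro!: exI[of _ "condQ K x t + 1"] less_imp_le)
  ultimately show "?F (condQ K x t) \<ge> t"
    by (intro tendsto_lowerbound) auto
qed

lemma condQ_reg:
  fixes K :: "'a \<Rightarrow> real measure"
  assumes P: "prob_space (K x)" and S: "sets (K x) = sets borel"
    and Qc: "continuous_on {0<..<1} (condQ K x)" and Qm: "strict_mono_on {0<..<1} (condQ K x)"
  shows condF_condQ: "0 < t \<Longrightarrow> t < 1 \<Longrightarrow> condF K x (condQ K x t) = t"
    and condQ_condF: "0 < condF K x y \<Longrightarrow> condF K x y < 1 \<Longrightarrow> condQ K x (condF K x y) = y"
    and condF_atom: "measure (K x) {y} = 0"
    and condF_isCont: "isCont (condF K x) y"
    and condF_le_set: "0 < t \<Longrightarrow> t < 1 \<Longrightarrow> {y. condF K x y \<le> t} = {..condQ K x t}"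
proof -
  let ?F = "condF K x" and ?Q = "condQ K x"
  note mono = condF_mono[where K=K and x=x, OF P S]
  note le1 = condF_le1[where K=K and x=x, OF P S]
  note nn = condF_nonneg[where K=K and x=x, OF P S]
  show FQ: "?F (?Q t) = t" if t: "0 < t" "t < 1" for t
  proof (rule ccontr)
    assume "?F (?Q t) \<noteq> t"
    with condQ_F_ge[where K=K and x=x, OF P S t] have lt: "t < ?F (?Q t)" by auto
    define t' where "t' = (t + ?F (?Q t)) / 2"
    have t': "t < t'" "t' < ?F (?Q t)" "0 < t'" "t' < 1" using lt le1[of "?Q t"] t by (auto simp: t'_def)
    have "?Q t' \<le> ?Q t" unfolding condQ_def[of K x t']
      by (rule cInf_lower) (use t' condQ_bdd[where K=K and x=x, OF P S, of t'] in auto)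
    moreover have "?Q t < ?Q t'" using Qm t t' by (auto simp: strict_mono_on_def)
    ultimately show False by simp
  qed
  show "?Q (?F y) = y" if y: "0 < ?F y" "?F y < 1" for y
  proof (rule antisym)
    show "y \<le> ?Q (?F y)" unfolding condQ_def[of K x "?F y"]
    proof (rule cInf_greatest)
      show "{\<alpha>. ?F y < ?F \<alpha>} \<noteq> {}" using condQ_ne[where K=K and x=x, OF P S y] .
      fix \<alpha> assume "\<alpha> \<in> {\<alpha>. ?F y < ?F \<alpha>}"
      then show "y \<le> \<alpha>" using mono[of \<alpha> y] by (cases "y \<le> \<alpha>") auto
    qed
    have "isCont ?Q (?F y)" using Qc y
      by (simp add: continuous_on_eq_continuous_at)
    then have lim: "(?Q \<longlongrightarrow> ?Q (?F y)) (at_left (?F y))"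
      by (simp add: isCont_def filterlim_at_split)
    have "eventually (\<lambda>s. s \<in> {0<..<?F y}) (at_left (?F y))"
      using y by (intro eventually_at_left_real) auto
    then have "eventually (\<lambda>s. ?Q s \<le> y) (at_left (?F y))"
    proof (rule eventually_mono)
      fix s assume s: "s \<in> {0<..<?F y}"
      then show "?Q s \<le> y" unfolding condQ_def[of K x s]
        by (intro cInf_lower condQ_bdd[where K=K and x=x, OF P S]) (use y in auto)
    qed
    then show "?Q (?F y) \<le> y"
      by (intro tendsto_upperbound[OF lim]) (auto simp: trivial_limit_at_left_real)
  qed
  show atom: "measure (K x) {y} = 0" for y
  proof (rule ccontr)
    interpret real_distribution "K x" using P S by (simp add: real_distribution_def real_distribution_axioms_def)
    assume "measure (K x) {y} \<noteq> 0"
    then have p: "measure (K x) {y} > 0" by (simp add: zero_less_measure_iff)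
    define a where "a = measure (K x) {..<y}"
    have Fy: "?F y = a + measure (K x) {y}"
    proof -
      have "{..y} = {..<y} \<union> {y}" by auto
      then show ?thesis unfolding condF_def a_def using finite_measure_Union[of "{..<y}" "{y}"] by simp
    qed
    have a0: "0 \<le> a" by (simp add: a_def)
    have Fle: "\<And>\<alpha>. \<alpha> < y \<Longrightarrow> ?F \<alpha> \<le> a"
      unfolding condF_def a_def by (intro finite_measure_mono) auto
    define t where "t = a + measure (K x) {y} / 3"
    define t' where "t' = a + 2 * measure (K x) {y} / 3"
    have tt: "0 < t" "t < t'" "t' < 1" "t' < ?F y" "a < t" "0 < t'" "t < 1"
      using p a0 le1[of y] by (auto simp: t_def t'_def Fy)
    have Qy: "?Q s = y" if s: "0 < s" "s < 1" "a < s" "s < ?F y" for s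
    proof (rule antisym)
      show "?Q s \<le> y" unfolding condQ_def[of K x s]
        by (intro cInf_lower condQ_bdd[where K=K and x=x, OF P S]) (use s in auto)
      show "y \<le> ?Q s" unfolding condQ_def[of K x s]
      proof (rule cInf_greatest)
        show "{\<alpha>. s < ?F \<alpha>} \<noteq> {}" using s by auto
        fix \<alpha> assume "\<alpha> \<in> {\<alpha>. s < ?F \<alpha>}"
        then show "y \<le> \<alpha>" using Fle[of \<alpha>] s by (cases "\<alpha> < y") auto
      qed
    qed
    have "?Q t < ?Q t'" using Qm tt by (auto simp: strict_mono_on_def)
    then show False using Qy[of t] Qy[of t'] tt by auto
  qed
  show "isCont ?F y"
  proof -
    interpret real_distribution "K x" using P S by (simp add: real_distribution_def real_distribution_axioms_def)
    have e: "?F = cdf (K x)" by (simp add: fun_eq_iff condF_def cdf_def)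
    have "measure (K x) {..<y} = measure (K x) {..y}"
    proof -
      have "measure (K x) {..y} = measure (K x) {..<y} + measure (K x) {y}"
      proof -
        have "{..y} = {..<y} \<union> {y}" by auto
        then show ?thesis using finite_measure_Union[of "{..<y}" "{y}"] by simp
      qed
      then show ?thesis using atom[of y] by simp
    qed
    then have "(?F \<longlongrightarrow> ?F y) (at_left y)" using cdf_at_left[of y] unfolding e cdf_def by simp
    moreover have "(?F \<longlongrightarrow> ?F y) (at_right y)" using condF_rc[where K=K and x=x, OF P S, of y]
      by (simp add: continuous_within)
    ultimately show ?thesis by (simp add: isCont_def filterlim_at_split)
  qed
  show "{y. ?F y \<le> t} = {..?Q t}" if t: "0 < t" "t < 1" for t
  proof (intro set_eqI iffI)
    fix y assume "y \<in> {y. ?F y \<le> t}"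
    then show "y \<in> {..?Q t}" using condQ_gt[where K=K and x=x, OF P S t, of y] by (cases "y \<le> ?Q t") auto
  next
    fix y assume "y \<in> {..?Q t}"
    then show "y \<in> {y. ?F y \<le> t}" using mono[of y "?Q t"] FQ[OF t] by auto
  qed
qed

lemma unif01_prob: "prob_space unif01" and sets_unif01: "sets unif01 = sets borel"
  unfolding unif01_def by (auto intro!: prob_space_uniform_measure)

lemma measure_unif01_atMost: "measure unif01 {..t} = max 0 (min 1 t)"
proof -
  have "measure unif01 {..t} = measure lborel ({0..1} \<inter> {..t}) / measure lborel {0..1::real}"
    unfolding unif01_def by (subst measure_uniform_measure) auto
  also have "{0..1} \<inter> {..t} = (if t < 0 then {} else {0..min 1 t})" by auto
  finally show ?thesis by auto
qed

lemma measure_unif01_Icc: "measure unif01 {0..1} = 1"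
  unfolding unif01_def by (simp add: measure_def emeasure_uniform_measure)

lemma distr_condF_unif:
  fixes K :: "'a \<Rightarrow> real measure"
  assumes P: "prob_space (K x)" and S: "sets (K x) = sets borel"
    and Qc: "continuous_on {0<..<1} (condQ K x)" and Qm: "strict_mono_on {0<..<1} (condQ K x)"
  shows "distr (K x) borel (condF K x) = unif01"
proof -
  let ?F = "condF K x" and ?Q = "condQ K x"
  note mono = condF_mono[where K=K and x=x, OF P S]
  have Fm: "?F \<in> borel_measurable borel" by (rule borel_measurable_mono) (auto simp: mono_def mono)
  have Fm': "?F \<in> K x \<rightarrow>\<^sub>M borel" using Fm S by (simp cong: measurable_cong_sets)
  have rd1: "real_distribution (distr (K x) borel ?F)"
    unfolding real_distribution_def real_distribution_axioms_def
    by (auto intro!: prob_space.prob_space_distr P Fm')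
  have rd2: "real_distribution unif01"
    using unif01_prob sets_unif01 by (simp add: real_distribution_def real_distribution_axioms_def)
  have "cdf (distr (K x) borel ?F) t = cdf unif01 t" for t
  proof -
    interpret real_distribution "K x" using P S by (simp add: real_distribution_def real_distribution_axioms_def)
    have "cdf (distr (K x) borel ?F) t = measure (K x) {y. ?F y \<le> t}"
      unfolding cdf_def using Fm' by (simp add: measure_distr vimage_def)
    also have "\<dots> = max 0 (min 1 t)"
    proof (cases "t < 0")
      case True
      then have "{y. ?F y \<le> t} = {}" using condF_nonneg[where K=K and x=x, OF P S] by (auto simp: not_le intro: less_le_trans)
      then show ?thesis using True by simp
    next
      case False
      show ?thesis
      proof (cases "t \<ge> 1")
        case True
        then have "{y. ?F y \<le> t} = UNIV" using condF_le1[where K=K and x=x, OF P S] by (auto intro: order_trans)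
        then show ?thesis using True prob_space by simp
      next
        case False2: False
        show ?thesis
        proof (cases "t = 0")
          case False3: False
          then have t: "0 < t" "t < 1" using False False2 by auto
          have "measure (K x) {y. ?F y \<le> t} = measure (K x) {..?Q t}"
            unfolding condF_le_set[OF P S Qc Qm t] by (rule refl)
          also have "\<dots> = t" using condF_condQ[OF P S Qc Qm t] by (simp only: condF_def)
          finally show ?thesis using t by simp
        next
          case True
          have "measure (K x) {y. ?F y \<le> 0} \<le> s" if s: "0 < s" "s < 1" for s
          proof -
            have sub: "{y. ?F y \<le> 0} \<subseteq> {y. ?F y \<le> s}" using s by auto
            have "measure (K x) {y. ?F y \<le> 0} \<le> measure (K x) {y. ?F y \<le> s}"
              by (rule finite_measure_mono[OF sub]) (simp only: condF_le_set[OF P S Qc Qm s] S atMost_borel)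
            also have "\<dots> = s"
              unfolding condF_le_set[OF P S Qc Qm s] using condF_condQ[OF P S Qc Qm s] by (simp only: condF_def)
            finally show ?thesis .
          qed
          note ms = this
          have "measure (K x) {y. ?F y \<le> 0} \<le> 0"
          proof (rule ccontr)
            assume "\<not> measure (K x) {y. ?F y \<le> 0} \<le> 0"
            then have c: "measure (K x) {y. ?F y \<le> 0} > 0" by simp
            have c1: "measure (K x) {y. ?F y \<le> 0} \<le> 1" by (rule prob_le_1)
            have "measure (K x) {y. ?F y \<le> 0} \<le> measure (K x) {y. ?F y \<le> 0} / 2"
              by (rule ms) (use c c1 in linarith)+
            then show False using c by linarith
          qed
          then show ?thesis using True by (simp add: measure_nonneg antisym)
        qed
      qed
    qed
    also have "\<dots> = cdf unif01 t" by (simp add: cdf_def measure_unif01_atMost)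
    finally show ?thesis .
  qed
  then show ?thesis using cdf_unique[OF rd1 rd2] by auto
qed

lemma subgrad_deriv:
  fixes f g :: "real \<Rightarrow> real"
  assumes S: "open S" "t \<in> S"
    and sg: "\<And>w z. w \<in> S \<Longrightarrow> z \<in> S \<Longrightarrow> f w + g w * (z - w) \<le> f z"
    and gc: "isCont g t"
  shows "(f has_real_derivative g t) (at t)"
proof -
  have b: "\<bar>(f z - f t) / (z - t) - g t\<bar> \<le> \<bar>g z - g t\<bar>" if z: "z \<in> S" "z \<noteq> t" for z
  proof (cases "z > t")
    case True
    have 1: "g t * (z - t) \<le> f z - f t" using sg[OF S(2) z(1)] by simp
    have 2: "f z - f t \<le> g z * (z - t)" using sg[OF z(1) S(2)] by (simp add: algebra_simps)
    from 1 2 True have "g t \<le> (f z - f t) / (z - t)" "(f z - f t) / (z - t) \<le> g z"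
      by (simp_all add: pos_le_divide_eq pos_divide_le_eq)
    then show ?thesis by linarith
  next
    case False
    then have lt: "z - t < 0" using z by simp
    have 1: "g t * (z - t) \<le> f z - f t" using sg[OF S(2) z(1)] by simp
    have 2: "f z - f t \<le> g z * (z - t)" using sg[OF z(1) S(2)] by (simp add: algebra_simps)
    from 1 2 lt have "(f z - f t) / (z - t) \<le> g t" "g z \<le> (f z - f t) / (z - t)"
      by (simp_all add: neg_le_divide_eq neg_divide_le_eq)
    then show ?thesis by linarith
  qed
  have "((\<lambda>z. (f z - f t) / (z - t) - g t) \<longlongrightarrow> 0) (at t)"
  proof (rule Lim_null_comparison)
    show "eventually (\<lambda>z. norm ((f z - f t) / (z - t) - g t) \<le> \<bar>g z - g t\<bar>) (at t)"
      using eventually_at_in_open[OF S] by eventually_elim (use b in auto)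
    have "(g \<longlongrightarrow> g t) (at t)" using gc by (simp add: isCont_def)
    then have "((\<lambda>z. g z - g t) \<longlongrightarrow> 0) (at t)" by (simp add: LIM_zero)
    then show "((\<lambda>z. \<bar>g z - g t\<bar>) \<longlongrightarrow> 0) (at t)" using tendsto_rabs_zero by blast
  qed
  then show ?thesis by (simp add: has_field_derivative_iff LIM_zero_iff)
qed

lemma measure_unif01_Ioo: "0 \<le> a \<Longrightarrow> a \<le> b \<Longrightarrow> b \<le> 1 \<Longrightarrow> measure unif01 {a<..<b} = b - a"
proof -
  assume ab: "0 \<le> a" "a \<le> b" "b \<le> 1"
  have "measure unif01 {a<..<b} = measure lborel ({0..1} \<inter> {a<..<b}) / measure lborel {0..1::real}"
    unfolding unif01_def by (subst measure_uniform_measure) auto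
  also have "{0..1} \<inter> {a<..<b} = {a<..<b}" using ab by auto
  finally show ?thesis using ab by simp
qed

lemma AE_exists_in:
  assumes "AE y in M. P y" "A \<in> sets M" "measure M A > 0"
  shows "\<exists>y\<in>A. P y"
proof (rule ccontr)
  assume na: "\<not> (\<exists>y\<in>A. P y)"
  from assms(1) have "AE y in M. \<not> y \<in> A" by eventually_elim (use na in auto)
  then have "emeasure M {y\<in>space M. y \<in> A} = 0" by (rule emeasure_eq_0_AE)
  moreover have "{y\<in>space M. y \<in> A} = A" using sets.sets_into_space[OF assms(2)] by auto
  ultimately show False using assms(3) by (simp add: measure_def)
qed

lemma fiber_main:
  fixes K :: "'a \<Rightarrow> real measure" and f g :: "real \<Rightarrow> real"
  assumes P: "prob_space (K x)" and S: "sets (K x) = sets borel"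
    and Qc: "continuous_on {0<..<1} (condQ K x)" and Qm: "strict_mono_on {0<..<1} (condQ K x)"
    and cf: "\<forall>u\<in>{0..1}. ereal (f u) = (SUP y. ereal (u * y - g y))"
    and cg: "\<forall>y. ereal (g y) = (SUP u\<in>{0..1}. ereal (u * y - f u))"
    and sl: "AE y in K x. f (condF K x y) + g y = condF K x y * y"
  shows "(\<forall>t\<in>{0<..<1}. (f has_real_derivative condQ K x t) (at t)) \<and>
         (\<forall>y. (g has_real_derivative condF K x y) (at y))"
proof -
  let ?F = "condF K x" and ?Q = "condQ K x"
  note mono = condF_mono[where K=K and x=x, OF P S]
  note le1 = condF_le1[where K=K and x=x, OF P S]
  note nn = condF_nonneg[where K=K and x=x, OF P S]
  have FY: "u * y - f u \<le> g y" if "u \<in> {0..1}" for u y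
  proof -
    have e: "ereal (g y) = (SUP u\<in>{0..1}. ereal (u * y - f u))" using cg by blast
    have "ereal (u * y - f u) \<le> ereal (g y)" unfolding e using that by (rule SUP_upper)
    then show ?thesis by simp
  qed
  have gle: "g y \<le> c" if "\<And>u. u \<in> {0..1} \<Longrightarrow> u * y - f u \<le> c" for y c
  proof -
    have "(SUP u\<in>{0..1}. ereal (u * y - f u)) \<le> ereal c" using that by (intro SUP_least) simp
    then show ?thesis using cg by (metis ereal_less_eq(3))
  qed
  have fle: "f u \<le> c" if "u \<in> {0..1}" "\<And>y. u * y - g y \<le> c" for u c
  proof -
    have "(SUP y. ereal (u * y - g y)) \<le> ereal c" using that by (intro SUP_least) simp
    then show ?thesis using cf that(1) by (metis ereal_less_eq(3))
  qed
  have gmono: "g y \<le> g z" if "y \<le> z" for y z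
  proof (rule gle)
    fix u :: real assume u: "u \<in> {0..1}"
    have "u * y \<le> u * z" using u that by (intro mult_left_mono) auto
    then show "u * y - f u \<le> g z" using FY[OF u, of z] by linarith
  qed
  have glip: "g z \<le> g y + (z - y)" if "y \<le> z" for y z
  proof (rule gle)
    fix u :: real assume u: "u \<in> {0..1}"
    have "u * (z - y) \<le> 1 * (z - y)" using u that by (intro mult_right_mono) auto
    then show "u * z - f u \<le> g y + (z - y)" using FY[OF u, of y] by (simp add: algebra_simps)
  qed
  have gabs: "\<bar>g z - g y\<bar> \<le> \<bar>z - y\<bar>" for y z
    using glip[of y z] glip[of z y] gmono[of y z] gmono[of z y] by (cases "y \<le> z") auto
  have gcont: "isCont g y" for y
  proof -
    have "((\<lambda>z. g z - g y) \<longlongrightarrow> 0) (at y)"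
    proof (rule Lim_null_comparison)
      show "eventually (\<lambda>z. norm (g z - g y) \<le> \<bar>z - y\<bar>) (at y)" using gabs by auto
      have "((\<lambda>z. z - y) \<longlongrightarrow> 0) (at y)" by (simp add: LIM_zero_iff tendsto_ident_at)
      then show "((\<lambda>z. \<bar>z - y\<bar>) \<longlongrightarrow> 0) (at y)" using tendsto_rabs_zero by blast
    qed
    then show ?thesis by (simp add: isCont_def LIM_zero_iff)
  qed
  have sgS: "g y + ?F y * (z - y) \<le> g z" if "f (?F y) + g y = ?F y * y" for y z
    using FY[of "?F y" z] that nn[of y] le1[of y] by (simp add: algebra_simps)
  have Fm: "?F \<in> borel_measurable borel" by (rule borel_measurable_mono) (auto simp: mono_def mono)
  have Fm': "?F \<in> K x \<rightarrow>\<^sub>M borel" using Fm S by (simp cong: measurable_cong_sets)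
  have dens: "\<exists>y. f (?F y) + g y = ?F y * y \<and> 0 < ?F y \<and> ?F y < 1 \<and> \<bar>?F y - t\<bar> < d"
    if t: "0 < t" "t < 1" and d: "0 < d" for t d
  proof -
    define d' where "d' = min d (min t (1 - t))"
    have d': "0 < d'" "d' \<le> d" "d' \<le> t" "d' \<le> 1 - t" using t d by (auto simp: d'_def)
    define A where "A = ?F -` {t - d'<..<t + d'}"
    have sp: "space (K x) = UNIV" using sets_eq_imp_space_eq[OF S] by simp
    have "?F -` {t - d'<..<t + d'} \<inter> space (K x) \<in> sets (K x)" by (rule measurable_sets[OF Fm']) simp
    then have A: "A \<in> sets (K x)" unfolding A_def sp by simp
    have "measure (K x) A = measure (distr (K x) borel ?F) {t - d'<..<t + d'}"
      using Fm' by (simp add: measure_distr A_def S sp)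
    also have "\<dots> = 2 * d'" using distr_condF_unif[OF P S Qc Qm] d' by (simp add: measure_unif01_Ioo)
    finally have "measure (K x) A > 0" using d' by simp
    from AE_exists_in[OF sl A this] obtain y where "y \<in> A" "f (?F y) + g y = ?F y * y" by blast
    then show ?thesis using d' by (auto simp: A_def abs_less_iff)
  qed
  have Qcont: "isCont ?Q t" if "0 < t" "t < 1" for t
    using Qc that by (simp add: continuous_on_eq_continuous_at)
  have sgQ: "g (?Q t) + t * (z - ?Q t) \<le> g z" if t: "0 < t" "t < 1" for t z
  proof -
    have "\<forall>n. \<exists>y. f (?F y) + g y = ?F y * y \<and> 0 < ?F y \<and> ?F y < 1 \<and> \<bar>?F y - t\<bar> < 1 / Suc n"
      by (intro allI dens[OF t]) simp
    from choice[OF this] obtain Y where Y0: "\<forall>n. f (?F (Y n)) + g (Y n) = ?F (Y n) * Y n \<and> 0 < ?F (Y n) \<and>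
      ?F (Y n) < 1 \<and> \<bar>?F (Y n) - t\<bar> < 1 / Suc n" by blast
    have Y: "\<And>n. f (?F (Y n)) + g (Y n) = ?F (Y n) * Y n" "\<And>n. 0 < ?F (Y n)"
      "\<And>n. ?F (Y n) < 1" "\<And>n. \<bar>?F (Y n) - t\<bar> < 1 / Suc n"
      using Y0 by blast+
    have FY_lim: "(\<lambda>n. ?F (Y n)) \<longlonglongrightarrow> t"
    proof (rule LIMSEQ_I)
      fix r :: real assume r: "0 < r"
      from reals_Archimedean[OF r] obtain N where "inverse (real (Suc N)) < r" by blast
      then have N: "1 / Suc N < r" by (simp add: inverse_eq_divide)
      show "\<exists>N. \<forall>n\<ge>N. norm (?F (Y n) - t) < r"
      proof (intro exI allI impI)
        fix n assume "N \<le> n"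
        then have "1 / real (Suc n) \<le> 1 / Suc N" by (intro divide_left_mono) auto
        then show "norm (?F (Y n) - t) < r" using Y(4)[of n] N by simp
      qed
    qed
    have YQ: "Y n = ?Q (?F (Y n))" for n using condQ_condF[OF P S Qc Qm Y(2) Y(3)] by simp
    have "(\<lambda>n. ?Q (?F (Y n))) = Y" by (rule ext) (rule YQ[symmetric])
    then have Ylim: "Y \<longlonglongrightarrow> ?Q t"
      using isCont_tendsto_compose[OF Qcont[OF t] FY_lim] by simp
    have "(\<lambda>n. g (Y n) + ?F (Y n) * (z - Y n)) \<longlonglongrightarrow> g (?Q t) + t * (z - ?Q t)"
      by (rule tendsto_add[OF isCont_tendsto_compose[OF gcont Ylim] tendsto_mult[OF FY_lim tendsto_diff[OF tendsto_const Ylim]]])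
    moreover have "\<forall>n. g (Y n) + ?F (Y n) * (z - Y n) \<le> g z" using sgS[OF Y(1)] by blast
    ultimately show ?thesis by (intro LIMSEQ_le_const2) auto
  qed
  have fQ: "f t + g (?Q t) = t * ?Q t" if t: "0 < t" "t < 1" for t
  proof (rule antisym)
    have "f t \<le> t * ?Q t - g (?Q t)"
    proof (rule fle)
      show "t \<in> {0..1}" using t by simp
      fix y show "t * y - g y \<le> t * ?Q t - g (?Q t)" using sgQ[OF t, of y] by (simp add: algebra_simps)
    qed
    then show "f t + g (?Q t) \<le> t * ?Q t" by simp
    show "t * ?Q t \<le> f t + g (?Q t)" using FY[of t "?Q t"] t by simp
  qed
  have part1: "\<forall>t\<in>{0<..<1}. (f has_real_derivative ?Q t) (at t)"
  proof
    fix t :: real assume t: "t \<in> {0<..<1}"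
    show "(f has_real_derivative ?Q t) (at t)"
    proof (rule subgrad_deriv[OF _ t])
      fix w z :: real assume w: "w \<in> {0<..<1}" and z: "z \<in> {0<..<1}"
      have "z * ?Q w - g (?Q w) \<le> f z" using FY[of z "?Q w"] z by simp
      then show "f w + ?Q w * (z - w) \<le> f z" using fQ[of w] w by (simp add: algebra_simps)
    qed (use Qcont t in auto)
  qed
  have Qhalf: "?Q s \<le> ?Q (1/2)" if "0 < s" "s \<le> 1/2" for s
  proof (cases "s < 1/2")
    case True
    then show ?thesis using strict_mono_onD[OF Qm, of s "1/2"] that by simp
  next
    case False
    then have e: "s = 1/2" using that by simp
    show ?thesis unfolding e by (rule order_refl)
  qed
  have Qhalf2: "?Q (1/2) \<le> ?Q s" if "1/2 \<le> s" "s < 1" for s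
  proof (cases "1/2 < s")
    case True
    then show ?thesis using strict_mono_onD[OF Qm, of "1/2" s] that by simp
  next
    case False
    then have e: "s = 1/2" using that by simp
    show ?thesis unfolding e by (rule order_refl)
  qed
  have eM: "e / (M + 1) * M \<le> e" if "0 < e" "0 \<le> M" for e M :: real
  proof -
    have "M / (M + 1) \<le> 1" using that by simp
    then have "e * (M / (M + 1)) \<le> e * 1" using that by (intro mult_left_mono) auto
    then show ?thesis by simp
  qed
  have sgF: "g y + ?F y * (z - y) \<le> g z" for y z
  proof -
    define M where "M = \<bar>z\<bar> + \<bar>y\<bar> + \<bar>?Q (1/2)\<bar>"
    have M0: "0 \<le> M" by (simp add: M_def)
    consider "0 < ?F y \<and> ?F y < 1" | "?F y = 0" | "?F y = 1" using nn[of y] le1[of y] by linarith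
    then show ?thesis
    proof cases
      case 1
      then show ?thesis using sgQ[of "?F y" z] condQ_condF[OF P S Qc Qm, of y] by simp
    next
      case 2
      have "g y \<le> g z + e" if e: "0 < e" for e
      proof -
        define t where "t = min (1/2) (e / (M + 1))"
        have ep: "0 < e / (M + 1)" using e M0 by simp
        have t0: "0 < t" unfolding t_def using ep by simp
        have t12: "t \<le> 1/2" "t \<le> e / (M + 1)" unfolding t_def by (rule min.cobounded1, rule min.cobounded2)
        note t = t0 t12
        then have t1: "t < 1" by simp
        have Fq: "?F (?Q t) = t" using condF_condQ[OF P S Qc Qm t(1) t1] .
        have yq: "y < ?Q t"
        proof (rule ccontr)
          assume "\<not> y < ?Q t"
          then have "?F (?Q t) \<le> ?F y" using mono by simp
          then show False using Fq 2 t by simp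
        qed
        have qh: "?Q t \<le> ?Q (1/2)" using Qhalf t by simp
        have zq: "\<bar>z - ?Q t\<bar> \<le> M" unfolding abs_le_iff M_def
          using yq qh abs_ge_self[of z] abs_ge_minus_self[of z] abs_ge_self[of y] abs_ge_minus_self[of y]
            abs_ge_self[of "?Q (1/2)"] abs_ge_minus_self[of "?Q (1/2)"] by linarith
        have "t * (- (z - ?Q t)) \<le> t * M" using zq t by (intro mult_left_mono) auto
        then have "- (t * (z - ?Q t)) \<le> t * M" by (simp add: right_diff_distrib)
        moreover have "t * M \<le> e / (M + 1) * M" using t M0 by (intro mult_right_mono) auto
        moreover have "e / (M + 1) * M \<le> e" using e M0 by (rule eM)
        moreover have "g y \<le> g (?Q t)" using gmono yq by simp
        ultimately show ?thesis using sgQ[OF t(1) t1, of z] by linarith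
      qed
      then have "g y \<le> g z" by (rule field_le_epsilon)
      then show ?thesis using 2 by simp
    next
      case 3
      have "g y + (z - y) \<le> g z + e" if e: "0 < e" for e
      proof -
        define t where "t = max (1/2) (1 - e / (M + 1))"
        have ep: "0 < e / (M + 1)" using e M0 by simp
        have t1': "1/2 \<le> t" "1 - e / (M + 1) \<le> t" unfolding t_def by (rule max.cobounded1, rule max.cobounded2)
        have t2': "t < 1" unfolding t_def using ep by simp
        have t: "1/2 \<le> t" "t < 1" "1 - t \<le> e / (M + 1)" using t1' t2' by linarith+
        then have t0: "0 < t" by simp
        have Fq: "?F (?Q t) = t" using condF_condQ[OF P S Qc Qm t0 t(2)] .
        have yq: "?Q t < y"
        proof (rule ccontr)
          assume "\<not> ?Q t < y"
          then have "?F y \<le> ?F (?Q t)" using mono by simp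
          then show False using Fq 3 t by simp
        qed
        have qh: "?Q (1/2) \<le> ?Q t" using Qhalf2 t by simp
        have zq: "\<bar>z - ?Q t\<bar> \<le> M" unfolding abs_le_iff M_def
          using yq qh abs_ge_self[of z] abs_ge_minus_self[of z] abs_ge_self[of y] abs_ge_minus_self[of y]
            abs_ge_self[of "?Q (1/2)"] abs_ge_minus_self[of "?Q (1/2)"] by linarith
        have "(1 - t) * (z - ?Q t) \<le> (1 - t) * M" using zq t by (intro mult_left_mono) auto
        moreover have "(1 - t) * M \<le> e / (M + 1) * M" using t M0 by (intro mult_right_mono) auto
        moreover have "e / (M + 1) * M \<le> e" using e M0 by (rule eM)
        moreover have "g y \<le> g (?Q t) + (y - ?Q t)" using glip yq by simp
        moreover have "t * (z - ?Q t) = (z - ?Q t) - (1 - t) * (z - ?Q t)" by (simp add: algebra_simps)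
        ultimately show ?thesis using sgQ[OF t0 t(2), of z] by linarith
      qed
      then have "g y + (z - y) \<le> g z" by (rule field_le_epsilon)
      then show ?thesis using 3 by simp
    qed
  qed
  have part2: "\<forall>y. (g has_real_derivative ?F y) (at y)"
  proof
    fix y :: real
    show "(g has_real_derivative ?F y) (at y)"
      by (rule subgrad_deriv[of UNIV]) (use sgF condF_isCont[OF P S Qc Qm] in auto)
  qed
  from part1 part2 show ?thesis by blast
qed

lemma integrable_bdd:
  fixes f :: "_ \<Rightarrow> real"
  assumes "prob_space M" "f \<in> borel_measurable M" "AE x in M. \<bar>f x\<bar> \<le> B"
  shows "integrable M f"
proof -
  interpret prob_space M by fact
  have i: "integrable M (\<lambda>_. B)" by simp
  have a: "AE x in M. norm (f x) \<le> norm B" using assms(3) by eventually_elim auto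
  show ?thesis by (rule Bochner_Integration.integrable_bound[OF i assms(2) a])
qed

locale mt5 =
  fixes M :: "'w measure"
    and X :: "'w \<Rightarrow> 'a::euclidean_space"
    and Y :: "'w \<Rightarrow> real"
    and K :: "'a \<Rightarrow> real measure"
    and \<phi> \<psi> :: "'a \<Rightarrow> real \<Rightarrow> real"
  assumes M: "prob_space M"
    and X[measurable]: "X \<in> borel_measurable M" and Y[measurable]: "Y \<in> borel_measurable M"
    and compact_supp: "\<exists>C. compact C \<and> (AE z in distr M borel (\<lambda>\<omega>. (X \<omega>, Y \<omega>)). z \<in> C)"
    and K_kernel: "K \<in> borel \<rightarrow>\<^sub>M prob_algebra borel"
    and disint: "\<forall>A\<in>sets borel. \<forall>B\<in>sets borel.
                   measure (distr M borel (\<lambda>\<omega>. (X \<omega>, Y \<omega>))) (A \<times> B) = (\<integral>x. indicator A x * measure (K x) B \<partial>(distr M borel X))"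
    and Q_reg: "AE x in distr M borel X. continuous_on {0<..<1} (condQ K x) \<and> strict_mono_on {0<..<1} (condQ K x)"
    and dual_opt: "dual_optimal (distr M borel (\<lambda>\<omega>. (X \<omega>, Y \<omega>))) (distr M borel X) \<phi> \<psi>"
    and conj: "AE x in distr M borel X.
        (\<forall>u\<in>{0..1}. ereal (\<phi> x u) = (SUP y. ereal (u * y - \<psi> x y))) \<and>
        (\<forall>y. ereal (\<psi> x y) = (SUP u\<in>{0..1}. ereal (u * y - \<phi> x u)))"
begin

abbreviation "nu \<equiv> distr M borel (\<lambda>\<omega>. (X \<omega>, Y \<omega>))"
abbreviation "mm \<equiv> distr M borel X"

lemma XY_meas[measurable]: "(\<lambda>\<omega>. (X \<omega>, Y \<omega>)) \<in> M \<rightarrow>\<^sub>M borel"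
  by measurable

lemma prob_nu: "prob_space nu" and prob_mm: "prob_space mm"
  using M by (auto intro!: prob_space.prob_space_distr)

lemma sets_nu[simp, measurable_cong]: "sets nu = sets borel" and sets_mm[simp, measurable_cong]: "sets mm = sets borel"
  by auto

lemma space_nu[simp]: "space nu = UNIV" and space_mm[simp]: "space mm = UNIV"
  by auto

lemma K_prob: "prob_space (K x)" and K_sets: "sets (K x) = sets borel"
proof -
  have "K x \<in> space (prob_algebra borel)" using measurable_space[OF K_kernel] by simp
  then show "prob_space (K x)" "sets (K x) = sets borel" by (auto simp: space_prob_algebra)
qed

lemma K_emeasure: "emeasure (K x) A = ennreal (measure (K x) A)"
proof -
  interpret prob_space "K x" by (rule K_prob)
  show ?thesis by (rule emeasure_eq_measure)
qed

lemma K_le1: "measure (K x) A \<le> 1"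
proof -
  interpret prob_space "K x" by (rule K_prob)
  show ?thesis by (rule prob_le_1)
qed

lemma K_sub[measurable]: "K \<in> borel \<rightarrow>\<^sub>M subprob_algebra borel"
  using K_kernel by (rule measurable_prob_algebraD)

lemma Pair_meas: "Pair x \<in> K x \<rightarrow>\<^sub>M (borel :: ('a \<times> real) measure)"
proof -
  have "(\<lambda>y. (x, y)) \<in> (borel::real measure) \<rightarrow>\<^sub>M (borel::('a \<times> real) measure)" by measurable
  then show ?thesis using K_sets[of x] by (simp cong: measurable_cong_sets)
qed

definition NN :: "'a \<Rightarrow> ('a \<times> real) measure" where
  "NN x = distr (K x) borel (Pair x)"

lemma NN_meas[measurable]: "NN \<in> borel \<rightarrow>\<^sub>M subprob_algebra borel"
proof -
  have "(\<lambda>(x, y). (x, y)) \<in> (borel::'a measure) \<Otimes>\<^sub>M (borel :: real measure) \<rightarrow>\<^sub>M (borel :: ('a \<times> real) measure)"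
    by (simp add: borel_prod measurable_ident_sets)
  then have "(\<lambda>x. distr (K x) borel (\<lambda>y. (x, y))) \<in> borel \<rightarrow>\<^sub>M subprob_algebra borel"
    by (intro measurable_distr2[where M=borel]) (auto simp: case_prod_unfold K_sub)
  then show ?thesis unfolding NN_def by simp
qed

lemma NN_meas_mm[measurable]: "NN \<in> mm \<rightarrow>\<^sub>M subprob_algebra borel"
  using NN_meas by (simp cong: measurable_cong_sets)

lemma nu_bind: "nu = mm \<bind> NN"
proof -
  have bp: "(borel::'a measure) \<Otimes>\<^sub>M (borel::real measure) = borel" by (rule borel_prod)
  show ?thesis
proof (rule measure_eqI_generator_eq_countable[OF Int_stable_pair_measure_generator[of "borel::'a measure" "borel :: real measure"]])
  show "{a \<times> b |a b. a \<in> sets borel \<and> b \<in> sets borel} \<subseteq> Pow UNIV" by auto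
  show "sets nu = sigma_sets UNIV {a \<times> b |a b. a \<in> sets (borel::'a measure) \<and> b \<in> sets (borel :: real measure)}"
    using sets_pair_measure[of "borel::'a measure" "borel :: real measure", unfolded bp] by simp
  have "sets (mm \<bind> NN) = sets borel"
    by (rule sets_bind) (auto simp: NN_def)
  then show "sets (mm \<bind> NN) = sigma_sets UNIV {a \<times> b |a b. a \<in> sets (borel::'a measure) \<and> b \<in> sets (borel :: real measure)}"
    using sets_pair_measure[of "borel::'a measure" "borel :: real measure", unfolded bp] by simp
  show "{UNIV \<times> UNIV} \<subseteq> {a \<times> b |a b. a \<in> sets (borel::'a measure) \<and> b \<in> sets (borel :: real measure)}"
    by (auto intro!: exI[of _ "UNIV::'a set"] exI[of _ "UNIV::real set"])
  show "\<Union>{UNIV \<times> UNIV} = UNIV" by simp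
  show "countable {UNIV \<times> UNIV}" by simp
  show "emeasure nu a \<noteq> \<infinity>" for a
  proof -
    interpret nu: prob_space nu by (rule prob_nu)
    show ?thesis by (simp add: nu.emeasure_eq_measure)
  qed
next
  fix Z assume "Z \<in> {a \<times> b |a b. a \<in> sets (borel::'a measure) \<and> b \<in> sets (borel :: real measure)}"
  then obtain A B where Z: "Z = A \<times> B" and A: "A \<in> sets borel" and B: "B \<in> sets borel" by auto
  have AB: "A \<times> B \<in> sets (borel :: ('a \<times> real) measure)"
    using pair_measureI[OF A B] unfolding bp .
  interpret nu: prob_space nu by (rule prob_nu)
  interpret mm: prob_space mm by (rule prob_mm)
  have meas: "(\<lambda>x. indicator A x * measure (K x) B) \<in> borel_measurable mm"
  proof -
    have "(\<lambda>x. measure (K x) B) \<in> borel_measurable borel"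
      using measure_measurable_subprob_algebra2[where A="\<lambda>_. B" and L=K and M=borel and N=borel] B
      by (simp add: K_sub)
    then show ?thesis using A by simp
  qed
  have "emeasure nu Z = ennreal (measure nu (A \<times> B))" by (simp add: Z nu.emeasure_eq_measure)
  also have "\<dots> = ennreal (\<integral>x. indicator A x * measure (K x) B \<partial>mm)" using disint A B by simp
  also have "\<dots> = (\<integral>\<^sup>+x. ennreal (indicator A x * measure (K x) B) \<partial>mm)"
  proof (rule nn_integral_eq_integral[symmetric])
    show "integrable mm (\<lambda>x. indicator A x * measure (K x) B)"
      by (rule integrable_bdd[OF prob_mm meas, of 1])
         (auto simp: indicator_def K_le1)
  qed (auto)
  also have "\<dots> = (\<integral>\<^sup>+x. emeasure (NN x) Z \<partial>mm)"
  proof (rule nn_integral_cong)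
    fix x
    have e: "Pair x -` (A \<times> B) \<inter> space (K x) = (if x \<in> A then B else {})"
      using sets_eq_imp_space_eq[OF K_sets[of x]] by auto
    have "emeasure (NN x) Z = emeasure (K x) (Pair x -` (A \<times> B) \<inter> space (K x))"
      unfolding NN_def Z by (rule emeasure_distr[OF Pair_meas AB])
    then have "emeasure (NN x) Z = (if x \<in> A then emeasure (K x) B else 0)"
      unfolding e by simp
    then show "ennreal (indicator A x * measure (K x) B) = emeasure (NN x) Z"
      by (simp add: indicator_def K_emeasure)
  qed
  also have "\<dots> = emeasure (mm \<bind> NN) Z"
    by (rule emeasure_bind[symmetric]) (use AB Z in auto)
  finally show "emeasure nu Z = emeasure (mm \<bind> NN) Z" .
qed
qed

lemma AE_nu:
  assumes P[measurable]: "Measurable.pred borel P"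
  shows "(AE z in nu. P z) \<longleftrightarrow> (AE x in mm. AE y in K x. P (x, y))"
proof -
  have "(AE z in nu. P z) \<longleftrightarrow> (AE x in mm. AE z in NN x. P z)"
    unfolding nu_bind by (rule AE_bind[OF NN_meas_mm P])
  also have "\<dots> \<longleftrightarrow> (AE x in mm. AE y in K x. P (x, y))"
  proof (rule AE_cong)
    fix x
    show "(AE z in NN x. P z) \<longleftrightarrow> (AE y in K x. P (x, y))"
      unfolding NN_def by (rule AE_distr_iff[OF Pair_meas]) simp
  qed
  finally show ?thesis .
qed

lemma fst_borel[measurable]: "fst \<in> (borel::('a \<times> real) measure) \<rightarrow>\<^sub>M (borel::'a measure)"
proof -
  have bp2: "(borel::'a measure) \<Otimes>\<^sub>M (borel::real measure) = borel" by (rule borel_prod)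
  show ?thesis using measurable_fst[of "borel::'a measure" "borel::real measure"] unfolding bp2 .
qed

lemma snd_borel[measurable]: "snd \<in> (borel::('a \<times> real) measure) \<rightarrow>\<^sub>M (borel::real measure)"
proof -
  have bp2: "(borel::'a measure) \<Otimes>\<^sub>M (borel::real measure) = borel" by (rule borel_prod)
  show ?thesis using measurable_snd[of "borel::'a measure" "borel::real measure"] unfolding bp2 .
qed

definition FF :: "'a \<times> real \<Rightarrow> real" where "FF p = condF K (fst p) (snd p)"

lemma FF_meas[measurable]: "FF \<in> borel_measurable borel"
proof -
  have e: "(SIGMA p:space (borel::('a \<times> real) measure). {..snd p}) =
    {q \<in> space ((borel::('a \<times> real) measure) \<Otimes>\<^sub>M (borel::real measure)). snd q \<le> snd (fst q)}"
    by (auto simp: space_pair_measure)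
  have "(SIGMA p:space (borel::('a \<times> real) measure). {..snd p}) \<in> sets ((borel::('a \<times> real) measure) \<Otimes>\<^sub>M (borel::real measure))"
    unfolding e
  proof (rule borel_measurable_le)
    have bp2: "(borel::'a measure) \<Otimes>\<^sub>M (borel::real measure) = borel" by (rule borel_prod)
    have s: "snd \<in> (borel::('a \<times> real) measure) \<rightarrow>\<^sub>M (borel::real measure)"
      using measurable_snd[of "borel::'a measure" "borel::real measure"] unfolding bp2 .
    show "(\<lambda>q. snd (fst q)) \<in> borel_measurable ((borel::('a \<times> real) measure) \<Otimes>\<^sub>M (borel::real measure))"
      by (rule measurable_compose[OF measurable_fst s])
  qed simp
  moreover have "(\<lambda>p. K (fst p)) \<in> (borel::('a \<times> real) measure) \<rightarrow>\<^sub>M subprob_algebra borel"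
  proof -
    have bp2: "(borel::'a measure) \<Otimes>\<^sub>M (borel::real measure) = borel" by (rule borel_prod)
    have f: "fst \<in> (borel::('a \<times> real) measure) \<rightarrow>\<^sub>M (borel::'a measure)"
      using measurable_fst[of "borel::'a measure" "borel::real measure"] unfolding bp2 .
    show ?thesis by (rule measurable_compose[OF f K_sub])
  qed
  ultimately have "(\<lambda>p. measure (K (fst p)) {..snd p}) \<in> borel_measurable borel"
    by (rule measure_measurable_subprob_algebra2)
  then show ?thesis unfolding FF_def[abs_def] condF_def by simp
qed

definition UU :: "'w \<Rightarrow> real" where "UU \<omega> = FF (X \<omega>, Y \<omega>)"

lemma UU_meas[measurable]: "UU \<in> borel_measurable M"
  unfolding UU_def by measurable

lemma UU_01: "0 \<le> UU \<omega>" "UU \<omega> \<le> 1"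
  unfolding UU_def FF_def using condF_nonneg[where K=K, OF K_prob K_sets] condF_le1[where K=K, OF K_prob K_sets] by auto

lemma condF_meas: "condF K x \<in> borel_measurable (K x)"
proof -
  have "condF K x \<in> borel_measurable borel"
    by (rule borel_measurable_mono) (auto simp: mono_def intro: condF_mono[where K=K, OF K_prob K_sets])
  then show ?thesis using K_sets[of x] by (simp cong: measurable_cong_sets)
qed

lemma law_XU: "distr M borel (\<lambda>\<omega>. (X \<omega>, UU \<omega>)) = mm \<Otimes>\<^sub>M unif01"
proof -
  have bp: "(borel::'a measure) \<Otimes>\<^sub>M (borel::real measure) = borel" by (rule borel_prod)
  interpret mm: prob_space mm by (rule prob_mm)
  interpret u: prob_space unif01 by (rule unif01_prob)
  show ?thesis
  proof (rule pair_measure_eqI[THEN sym])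
    show "sigma_finite_measure mm" "sigma_finite_measure unif01" by unfold_locales
    show "sets (mm \<Otimes>\<^sub>M unif01) = sets (distr M borel (\<lambda>\<omega>. (X \<omega>, UU \<omega>)))"
    proof -
      have "sets (mm \<Otimes>\<^sub>M unif01) = sets ((borel::'a measure) \<Otimes>\<^sub>M (borel::real measure))"
        by (rule sets_pair_measure_cong[OF sets_mm sets_unif01])
      also have "\<dots> = sets (borel::('a \<times> real) measure)" by (simp only: bp)
      finally show ?thesis by simp
    qed
  next
    fix A B :: "_ set" assume A: "A \<in> sets mm" and B: "B \<in> sets unif01"
    then have A': "A \<in> sets borel" and B': "B \<in> sets borel" using sets_unif01 by auto
    define S where "S = {p :: 'a \<times> real. fst p \<in> A \<and> FF p \<in> B}"
    have S: "S \<in> sets borel"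
    proof -
      have "S = (fst -` A \<inter> space borel) \<inter> (FF -` B \<inter> space borel)" by (auto simp: S_def)
      then show ?thesis using measurable_sets[OF fst_borel A'] measurable_sets[OF FF_meas B'] by auto
    qed
    have AB: "A \<times> B \<in> sets (borel :: ('a \<times> real) measure)" using pair_measureI[OF A' B'] unfolding bp .
    have XU: "(\<lambda>\<omega>. (X \<omega>, UU \<omega>)) \<in> M \<rightarrow>\<^sub>M (borel :: ('a \<times> real) measure)" by measurable
    have "emeasure (distr M borel (\<lambda>\<omega>. (X \<omega>, UU \<omega>))) (A \<times> B) =
        emeasure M ((\<lambda>\<omega>. (X \<omega>, UU \<omega>)) -` (A \<times> B) \<inter> space M)"
      by (rule emeasure_distr[OF XU AB])
    also have "(\<lambda>\<omega>. (X \<omega>, UU \<omega>)) -` (A \<times> B) \<inter> space M = (\<lambda>\<omega>. (X \<omega>, Y \<omega>)) -` S \<inter> space M"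
      by (auto simp: S_def UU_def)
    also have "emeasure M \<dots> = emeasure nu S"
      by (rule emeasure_distr[OF XY_meas S, symmetric])
    also have "\<dots> = (\<integral>\<^sup>+x. emeasure (NN x) S \<partial>mm)"
      unfolding nu_bind by (rule emeasure_bind) (use S in auto)
    also have "\<dots> = (\<integral>\<^sup>+x. indicator A x * emeasure unif01 B \<partial>mm)"
    proof (rule nn_integral_cong_AE)
      show "AE x in mm. emeasure (NN x) S = indicator A x * emeasure unif01 B"
        using Q_reg
      proof eventually_elim
        case (elim x)
        have e1: "emeasure (NN x) S = emeasure (K x) (Pair x -` S \<inter> space (K x))"
          unfolding NN_def by (rule emeasure_distr[OF Pair_meas S])
        have e2: "Pair x -` S \<inter> space (K x) = (if x \<in> A then condF K x -` B \<inter> space (K x) else {})"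
          using sets_eq_imp_space_eq[OF K_sets[of x]] by (auto simp: S_def FF_def)
        have "emeasure (K x) (condF K x -` B \<inter> space (K x)) = emeasure (distr (K x) borel (condF K x)) B"
          by (rule emeasure_distr[OF condF_meas B', symmetric])
        also have "\<dots> = emeasure unif01 B"
          using distr_condF_unif[where K=K and x=x, OF K_prob K_sets] elim by simp
        finally show ?case unfolding e1 e2 by (simp add: indicator_def)
      qed
    qed
    also have "\<dots> = emeasure mm A * emeasure unif01 B"
      using A by (simp add: nn_integral_multc)
    finally show "emeasure mm A * emeasure unif01 B = emeasure (distr M borel (\<lambda>\<omega>. (X \<omega>, UU \<omega>))) (A \<times> B)" ..
  qed
qed

end

definition DD :: "real \<Rightarrow> real set" where "DD R = {y\<in>\<rat>. -R \<le> y \<and> y \<le> R}"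
definition EE :: "real set" where "EE = {v\<in>\<rat>. 0 \<le> v \<and> v \<le> 1}"

definition psi0 :: "real measure \<Rightarrow> real \<Rightarrow> real" where
  "psi0 P y = enn2real (\<integral>\<^sup>+w. ennreal (max 0 (y - w)) \<partial>P)"
definition phi0 :: "real \<Rightarrow> real measure \<Rightarrow> real \<Rightarrow> real" where
  "phi0 R P u = (SUP y\<in>DD R. u * y - psi0 P y)"
definition psi1 :: "real \<Rightarrow> real measure \<Rightarrow> real \<Rightarrow> real" where
  "psi1 R P y = (SUP v\<in>EE. v * y - phi0 R P v)"

lemma countable_DD: "countable (DD R)" and countable_EE: "countable EE"
  unfolding DD_def EE_def by (auto intro: countable_subset[OF _ countable_rat])

lemma zero_DD: "0 \<le> R \<Longrightarrow> 0 \<in> DD R" and zero_EE: "0 \<in> EE" and one_EE: "1 \<in> EE"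
  unfolding DD_def EE_def by auto

lemma rat_approx:
  fixes a b q d :: real
  assumes "a \<in> \<rat>" "b \<in> \<rat>" "a \<le> q" "q \<le> b" "0 < d"
  shows "\<exists>r\<in>\<rat>. a \<le> r \<and> r \<le> b \<and> \<bar>r - q\<bar> < d"
proof (cases "q = b")
  case True then show ?thesis using assms by (intro bexI[of _ b]) auto
next
  case False
  then have "q < min (q + d) b" using assms by auto
  from Rats_dense_in_real[OF this] obtain r where "r \<in> \<rat>" "q < r" "r < min (q + d) b" by blast
  then show ?thesis using assms by (intro bexI[of _ r]) auto
qed

lemma psi0_nonneg: "0 \<le> psi0 P y"
  by (simp add: psi0_def)

context
  fixes R :: real and P :: "real measure"
  assumes R: "0 \<le> R"
begin

lemma phi0_bdd: "bdd_above ((\<lambda>y. u * y - psi0 P y) ` DD R)"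
proof (rule bdd_aboveI2[of _ _ "\<bar>u\<bar> * R"])
  fix y assume "y \<in> DD R"
  then have "\<bar>y\<bar> \<le> R" by (auto simp: DD_def)
  then have "u * y \<le> \<bar>u\<bar> * R"
  proof -
    assume yR: "\<bar>y\<bar> \<le> R"
    have "u * y \<le> \<bar>u * y\<bar>" by simp
    also have "\<dots> = \<bar>u\<bar> * \<bar>y\<bar>" by (simp add: abs_mult)
    also have "\<dots> \<le> \<bar>u\<bar> * R" using yR by (intro mult_left_mono) auto
    finally show ?thesis .
  qed
  then show "u * y - psi0 P y \<le> \<bar>u\<bar> * R" using psi0_nonneg[of P y] by linarith
qed

lemma phi0_ge: "y \<in> DD R \<Longrightarrow> u * y - psi0 P y \<le> phi0 R P u"
  unfolding phi0_def by (rule cSUP_upper[OF _ phi0_bdd])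

lemma phi0_ge0: "- psi0 P 0 \<le> phi0 R P u"
  using phi0_ge[OF zero_DD[OF R], of u] by simp

lemma phi0_le: "phi0 R P u \<le> \<bar>u\<bar> * R"
  unfolding phi0_def
proof (rule cSUP_least)
  show "DD R \<noteq> {}" using zero_DD[OF R] by auto
  fix y assume "y \<in> DD R"
  then have "\<bar>y\<bar> \<le> R" by (auto simp: DD_def)
  then have "u * y \<le> \<bar>u\<bar> * R"
  proof -
    assume yR: "\<bar>y\<bar> \<le> R"
    have "u * y \<le> \<bar>u * y\<bar>" by simp
    also have "\<dots> = \<bar>u\<bar> * \<bar>y\<bar>" by (simp add: abs_mult)
    also have "\<dots> \<le> \<bar>u\<bar> * R" using yR by (intro mult_left_mono) auto
    finally show ?thesis .
  qed
  then show "u * y - psi0 P y \<le> \<bar>u\<bar> * R" using psi0_nonneg[of P y] by linarith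
qed

lemma phi0_lip: "phi0 R P u \<le> phi0 R P v + R * \<bar>u - v\<bar>"
  unfolding phi0_def[of R P u]
proof (rule cSUP_least)
  show "DD R \<noteq> {}" using zero_DD[OF R] by auto
  fix y assume y: "y \<in> DD R"
  then have "\<bar>y\<bar> \<le> R" by (auto simp: DD_def)
  then have "(u - v) * y \<le> R * \<bar>u - v\<bar>"
  proof -
    assume yR: "\<bar>y\<bar> \<le> R"
    have "(u - v) * y \<le> \<bar>(u - v) * y\<bar>" by simp
    also have "\<dots> = \<bar>u - v\<bar> * \<bar>y\<bar>" by (simp add: abs_mult)
    also have "\<dots> \<le> \<bar>u - v\<bar> * R" using yR by (intro mult_left_mono) auto
    finally show ?thesis by (simp add: mult.commute)
  qed
  moreover have "v * y - psi0 P y \<le> phi0 R P v" by (rule phi0_ge[OF y])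
  ultimately show "u * y - psi0 P y \<le> phi0 R P v + R * \<bar>u - v\<bar>" by (simp add: algebra_simps)
qed

lemma psi1_bdd: "bdd_above ((\<lambda>v. v * y - phi0 R P v) ` EE)"
proof (rule bdd_aboveI2[of _ _ "\<bar>y\<bar> + psi0 P 0"])
  fix v assume "v \<in> EE"
  then have v: "0 \<le> v" "v \<le> 1" by (auto simp: EE_def)
  have "v * y \<le> \<bar>y\<bar>"
  proof -
    have "v * y \<le> \<bar>v * y\<bar>" by simp
    also have "\<dots> = v * \<bar>y\<bar>" using v by (simp add: abs_mult)
    also have "\<dots> \<le> 1 * \<bar>y\<bar>" using v by (intro mult_right_mono) auto
    finally show ?thesis by simp
  qed
  then show "v * y - phi0 R P v \<le> \<bar>y\<bar> + psi0 P 0" using phi0_ge0[of v] by linarith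
qed

lemma psi1_ge: "v \<in> EE \<Longrightarrow> v * y - phi0 R P v \<le> psi1 R P y"
  unfolding psi1_def by (rule cSUP_upper[OF _ psi1_bdd])

lemma psi1_ge0: "- phi0 R P 0 \<le> psi1 R P y"
  using psi1_ge[OF zero_EE, of y] by simp

lemma feas: assumes u: "u \<in> {0..1}" shows "u * y \<le> phi0 R P u + psi1 R P y"
proof -
  have "u * y - phi0 R P u \<le> psi1 R P y + e" if e: "0 < e" for e
  proof -
    define d where "d = e / (\<bar>y\<bar> + R + 1)"
    have d: "0 < d" using e R by (simp add: d_def)
    obtain r where r: "r \<in> \<rat>" "0 \<le> r" "r \<le> 1" "\<bar>r - u\<bar> < d"
      using rat_approx[of 0 1 u d] u d by auto
    then have rE: "r \<in> EE" by (simp add: EE_def)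
    have 1: "phi0 R P r \<le> phi0 R P u + R * \<bar>r - u\<bar>" by (rule phi0_lip)
    have 2: "u * y - r * y \<le> \<bar>r - u\<bar> * \<bar>y\<bar>"
    proof -
      have "u * y - r * y = (u - r) * y" by (simp add: algebra_simps)
      also have "\<dots> \<le> \<bar>(u - r) * y\<bar>" by simp
      also have "\<dots> = \<bar>r - u\<bar> * \<bar>y\<bar>" by (simp add: abs_mult abs_minus_commute)
      finally show ?thesis .
    qed
    have 3: "\<bar>r - u\<bar> * (\<bar>y\<bar> + R) \<le> d * (\<bar>y\<bar> + R + 1)"
    proof -
      have "\<bar>r - u\<bar> * (\<bar>y\<bar> + R) \<le> d * (\<bar>y\<bar> + R)" using r(4) R by (intro mult_right_mono) auto
      also have "\<dots> \<le> d * (\<bar>y\<bar> + R + 1)" using d by simp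
      finally show ?thesis .
    qed
    have 4: "d * (\<bar>y\<bar> + R + 1) = e" using R by (simp add: d_def)
    have 5: "r * y - phi0 R P r \<le> psi1 R P y" by (rule psi1_ge[OF rE])
    have "\<bar>r - u\<bar> * (\<bar>y\<bar> + R) = \<bar>r - u\<bar> * \<bar>y\<bar> + R * \<bar>r - u\<bar>" by (simp add: algebra_simps)
    then show ?thesis using 1 2 3 4 5 by linarith
  qed
  then have "u * y - phi0 R P u \<le> psi1 R P y" by (rule field_le_epsilon)
  then show ?thesis by simp
qed

end


context
  fixes K :: "'a \<Rightarrow> real measure" and x :: 'a and R :: real
  assumes P: "prob_space (K x)" and S: "sets (K x) = sets borel"
    and Qc: "continuous_on {0<..<1} (condQ K x)" and Qm: "strict_mono_on {0<..<1} (condQ K x)"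
    and R: "0 \<le> R" "R \<in> \<rat>" and supp: "AE w in K x. \<bar>w\<bar> \<le> R"
begin

interpretation Kx: prob_space "K x" by (rule P)

lemma sp: "space (K x) = UNIV" using sets_eq_imp_space_eq[OF S] by simp

lemma fy_meas: "(\<lambda>w. max 0 (y - w)) \<in> borel_measurable (K x)"
proof -
  have "(\<lambda>w::real. max 0 (y - w)) \<in> borel_measurable borel" by measurable
  then show ?thesis using S by (simp cong: measurable_cong_sets)
qed

lemma fy_int: "integrable (K x) (\<lambda>w. max 0 (y - w))"
proof (rule integrable_bdd[OF P fy_meas, of _ "\<bar>y\<bar> + R"])
  show "AE w in K x. \<bar>max 0 (y - w)\<bar> \<le> \<bar>y\<bar> + R"
    using supp by eventually_elim auto
qed

lemma psi0_eq: "psi0 (K x) y = (\<integral>w. max 0 (y - w) \<partial>K x)"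
proof -
  have "(\<integral>\<^sup>+w. ennreal (max 0 (y - w)) \<partial>K x) = ennreal (\<integral>w. max 0 (y - w) \<partial>K x)"
    by (rule nn_integral_eq_integral[OF fy_int]) auto
  then show ?thesis unfolding psi0_def by simp
qed

lemma psi0_lip1: "psi0 (K x) z \<le> psi0 (K x) y + \<bar>z - y\<bar>"
proof -
  have "(\<integral>w. max 0 (z - w) \<partial>K x) \<le> (\<integral>w. max 0 (y - w) + \<bar>z - y\<bar> \<partial>K x)"
    by (rule integral_mono[OF fy_int]) (auto intro!: Bochner_Integration.integrable_add fy_int)
  also have "\<dots> = (\<integral>w. max 0 (y - w) \<partial>K x) + \<bar>z - y\<bar>"
  proof -
    have "(\<integral>w. max 0 (y - w) + \<bar>z - y\<bar> \<partial>K x) = (\<integral>w. max 0 (y - w) \<partial>K x) + (\<integral>w. \<bar>z - y\<bar> \<partial>K x)"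
      by (rule Bochner_Integration.integral_add[OF fy_int]) simp
    also have "(\<integral>w. \<bar>z - y\<bar> \<partial>K x) = \<bar>z - y\<bar>" by (simp add: Kx.prob_space)
    finally show ?thesis .
  qed
  finally show ?thesis by (simp add: psi0_eq)
qed

lemma psi0_abs: "\<bar>psi0 (K x) z - psi0 (K x) y\<bar> \<le> \<bar>z - y\<bar>"
  using psi0_lip1[of z y] psi0_lip1[of y z] by (simp add: abs_minus_commute abs_le_iff)

lemma psi0_cont: "isCont (psi0 (K x)) y"
proof -
  have "((\<lambda>z. psi0 (K x) z - psi0 (K x) y) \<longlongrightarrow> 0) (at y)"
  proof (rule Lim_null_comparison)
    show "eventually (\<lambda>z. norm (psi0 (K x) z - psi0 (K x) y) \<le> \<bar>z - y\<bar>) (at y)" using psi0_abs by auto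
    have "((\<lambda>z. z - y) \<longlongrightarrow> 0) (at y)" by (simp add: LIM_zero_iff tendsto_ident_at)
    then show "((\<lambda>z. \<bar>z - y\<bar>) \<longlongrightarrow> 0) (at y)" using tendsto_rabs_zero by blast
  qed
  then show ?thesis by (simp add: isCont_def LIM_zero_iff)
qed

lemma psi0_subgrad: "psi0 (K x) y + condF K x y * (z - y) \<le> psi0 (K x) z"
proof -
  have ind: "integrable (K x) (\<lambda>w. (z - y) * indicator {..y} w)"
    by (intro integrable_mult_right integrable_real_indicator) (auto simp: S less_top[symmetric] Kx.emeasure_finite)
  have "(\<integral>w. max 0 (y - w) + (z - y) * indicator {..y} w \<partial>K x) \<le> (\<integral>w. max 0 (z - w) \<partial>K x)"
    by (rule integral_mono[OF Bochner_Integration.integrable_add[OF fy_int ind] fy_int]) (auto simp: indicator_def)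
  moreover have "(\<integral>w. max 0 (y - w) + (z - y) * indicator {..y} w \<partial>K x) =
      (\<integral>w. max 0 (y - w) \<partial>K x) + (z - y) * measure (K x) {..y}"
    by (subst Bochner_Integration.integral_add[OF fy_int ind]) (simp add: sp)
  ultimately show ?thesis by (simp add: psi0_eq condF_def algebra_simps)
qed

lemma psi0_zero: "psi0 (K x) 0 \<le> R"
proof -
  have "(\<integral>w. max 0 (0 - w) \<partial>K x) \<le> (\<integral>w. R \<partial>K x)"
  proof (rule integral_mono_AE[OF fy_int])
    show "AE w in K x. max 0 (0 - w) \<le> R" using supp by eventually_elim (use R in auto)
  qed simp
  then show ?thesis by (simp add: psi0_eq Kx.prob_space)
qed

lemma F_above: "R \<le> y \<Longrightarrow> condF K x y = 1"
proof -
  assume y: "R \<le> y"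
  have "AE w in K x. w \<in> {..y}" using supp by eventually_elim (use y in auto)
  then have "measure (K x) {..y} = 1" by (simp add: Kx.prob_eq_1 S)
  then show ?thesis by (simp add: condF_def)
qed

lemma F_below: "y < -R \<Longrightarrow> condF K x y = 0"
proof -
  assume y: "y < -R"
  have "AE w in K x. w \<notin> {..y}" using supp by eventually_elim (use y in auto)
  then have "measure (K x) {..y} = 0" by (simp add: Kx.prob_eq_0 S)
  then show ?thesis by (simp add: condF_def)
qed

lemma Q_range: assumes t: "0 < t" "t < 1" shows "-R \<le> condQ K x t" "condQ K x t \<le> R"
proof -
  have F: "condF K x (condQ K x t) = t" by (rule condF_condQ[OF P S Qc Qm t])
  show "condQ K x t \<le> R"
  proof (rule ccontr)
    assume "\<not> condQ K x t \<le> R"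
    then have "condF K x (condQ K x t) = 1" by (intro F_above) simp
    then show False using F t by simp
  qed
  show "-R \<le> condQ K x t"
  proof (rule ccontr)
    assume "\<not> -R \<le> condQ K x t"
    then have "condF K x (condQ K x t) = 0" by (intro F_below) simp
    then show False using F t by simp
  qed
qed

lemma phi0_ge_any: assumes q: "-R \<le> q" "q \<le> R" shows "v * q - psi0 (K x) q \<le> phi0 R (K x) v"
proof -
  have "v * q - psi0 (K x) q \<le> phi0 R (K x) v + e" if e: "0 < e" for e
  proof -
    define d where "d = e / (\<bar>v\<bar> + 1)"
    have d: "0 < d" using e by (simp add: d_def)
    have mR: "-R \<in> \<rat>" using R by simp
    obtain r where r: "r \<in> \<rat>" "-R \<le> r" "r \<le> R" "\<bar>r - q\<bar> < d"
      using rat_approx[OF mR R(2) q d] by auto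
    then have rD: "r \<in> DD R" by (simp add: DD_def)
    have 1: "v * r - psi0 (K x) r \<le> phi0 R (K x) v" by (rule phi0_ge[OF R(1) rD])
    have 2: "psi0 (K x) r \<le> psi0 (K x) q + \<bar>r - q\<bar>" by (rule psi0_lip1)
    have 3: "v * q - v * r \<le> \<bar>v\<bar> * \<bar>r - q\<bar>"
    proof -
      have "v * q - v * r = v * (q - r)" by (simp add: algebra_simps)
      also have "\<dots> \<le> \<bar>v * (q - r)\<bar>" by simp
      also have "\<dots> = \<bar>v\<bar> * \<bar>r - q\<bar>" by (simp add: abs_mult abs_minus_commute)
      finally show ?thesis .
    qed
    have 4: "(\<bar>v\<bar> + 1) * \<bar>r - q\<bar> \<le> (\<bar>v\<bar> + 1) * d" using r(4) by (intro mult_left_mono) auto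
    have 5: "(\<bar>v\<bar> + 1) * d = e" by (simp add: d_def)
    have "(\<bar>v\<bar> + 1) * \<bar>r - q\<bar> = \<bar>v\<bar> * \<bar>r - q\<bar> + \<bar>r - q\<bar>" by (simp add: algebra_simps)
    then show ?thesis using 1 2 3 4 5 by linarith
  qed
  then show ?thesis by (rule field_le_epsilon)
qed

lemma phi0_at: assumes t: "0 < t" "t < 1"
  shows "phi0 R (K x) t = t * condQ K x t - psi0 (K x) (condQ K x t)"
proof (rule antisym)
  let ?q = "condQ K x t"
  have F: "condF K x ?q = t" by (rule condF_condQ[OF P S Qc Qm t])
  show "phi0 R (K x) t \<le> t * ?q - psi0 (K x) ?q"
    unfolding phi0_def
  proof (rule cSUP_least)
    show "DD R \<noteq> {}" using zero_DD[OF R(1)] by auto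
    fix y assume "y \<in> DD R"
    have "psi0 (K x) ?q + t * (y - ?q) \<le> psi0 (K x) y" using psi0_subgrad[of ?q y] F by simp
    then show "t * y - psi0 (K x) y \<le> t * ?q - psi0 (K x) ?q" by (simp add: algebra_simps)
  qed
  show "t * ?q - psi0 (K x) ?q \<le> phi0 R (K x) t" by (rule phi0_ge_any[OF Q_range[OF t]])
qed

lemma fiber_identity: assumes t: "0 < t" "t < 1"
  shows "phi0 R (K x) t + psi1 R (K x) (condQ K x t) = t * condQ K x t"
proof (rule antisym)
  let ?q = "condQ K x t"
  have "psi1 R (K x) ?q \<le> t * ?q - phi0 R (K x) t"
    unfolding psi1_def
  proof (rule cSUP_least)
    show "EE \<noteq> {}" using zero_EE by auto
    fix v assume "v \<in> EE"
    have "v * ?q - psi0 (K x) ?q \<le> phi0 R (K x) v" by (rule phi0_ge_any[OF Q_range[OF t]])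
    then show "v * ?q - phi0 R (K x) v \<le> t * ?q - phi0 R (K x) t" using phi0_at[OF t] by simp
  qed
  then show "phi0 R (K x) t + psi1 R (K x) ?q \<le> t * ?q" by simp
  show "t * ?q \<le> phi0 R (K x) t + psi1 R (K x) ?q" by (rule feas[OF R(1)]) (use t in auto)
qed

lemma phi0_abs: "u \<in> {0..1} \<Longrightarrow> \<bar>phi0 R (K x) u\<bar> \<le> R"
proof -
  assume u: "u \<in> {0..1}"
  have "\<bar>u\<bar> * R \<le> 1 * R" using u R by (intro mult_right_mono) auto
  then show ?thesis
    using phi0_le[OF R(1), of "K x" u] phi0_ge0[OF R(1), of "K x" u] psi0_zero
    by (simp add: abs_le_iff)
qed

lemma psi1_abs: "\<bar>y\<bar> \<le> R \<Longrightarrow> \<bar>psi1 R (K x) y\<bar> \<le> 2 * R"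
proof -
  assume y: "\<bar>y\<bar> \<le> R"
  have up: "psi1 R (K x) y \<le> 2 * R"
    unfolding psi1_def
  proof (rule cSUP_least)
    show "EE \<noteq> {}" using zero_EE by auto
    fix v assume v: "v \<in> EE"
    then have v01: "0 \<le> v" "v \<le> 1" by (auto simp: EE_def)
    have "v * y \<le> \<bar>v * y\<bar>" by simp
    also have "\<dots> = v * \<bar>y\<bar>" using v01 by (simp add: abs_mult)
    also have "\<dots> \<le> 1 * R" using v01 y by (intro mult_mono) auto
    finally have "v * y \<le> R" by simp
    moreover have "- phi0 R (K x) v \<le> R" using phi0_abs[of v] v01 by auto
    ultimately show "v * y - phi0 R (K x) v \<le> 2 * R" by simp
  qed
  have lo: "- R \<le> psi1 R (K x) y"
    using psi1_ge0[OF R(1), of "K x" y] phi0_abs[of 0] by auto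
  show ?thesis using up lo R by simp
qed

end

lemma unif_AE: "AE u in unif01. 0 < u \<and> u < 1"
  unfolding unif01_def
proof (rule AE_uniform_measureI)
  show "{0..1::real} \<in> sets lborel" by simp
  show "AE x in lborel. x \<in> {0..1::real} \<longrightarrow> 0 < x \<and> x < 1"
    using AE_lborel_singleton[of "0::real"] AE_lborel_singleton[of "1::real"]
    by eventually_elim auto
qed

context mt5
begin

lemma ex_R: "\<exists>R. 0 \<le> R \<and> R \<in> \<rat> \<and> (AE z in nu. \<bar>snd z\<bar> \<le> R)"
proof -
  from compact_supp obtain C where C: "compact C" "AE z in nu. z \<in> C" by blast
  from compact_imp_bounded[OF C(1)] obtain a where a: "\<And>z. z \<in> C \<Longrightarrow> norm z \<le> a"
    by (auto simp: bounded_iff)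
  define R where "R = real (nat \<lceil>a\<rceil>)"
  have aR: "a \<le> R" unfolding R_def by (rule real_nat_ceiling_ge)
  have "AE z in nu. \<bar>snd z\<bar> \<le> R" using C(2)
  proof eventually_elim
    case (elim z)
    have "\<bar>snd z\<bar> = norm (snd z)" by simp
    also have "\<dots> \<le> norm z" using norm_snd_le[of "snd z" "fst z"] by simp
    also have "\<dots> \<le> a" using a[OF elim] .
    finally show ?case using aR by simp
  qed
  moreover have "0 \<le> R" "R \<in> \<rat>" by (auto simp: R_def)
  ultimately show ?thesis by blast
qed

definition RR :: real where "RR = (SOME R. 0 \<le> R \<and> R \<in> \<rat> \<and> (AE z in nu. \<bar>snd z\<bar> \<le> R))"

lemma RR: "0 \<le> RR" "RR \<in> \<rat>" "AE z in nu. \<bar>snd z\<bar> \<le> RR"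
  using someI_ex[OF ex_R] unfolding RR_def[symmetric] by auto

definition good :: "'a \<Rightarrow> bool" where
  "good x \<longleftrightarrow> continuous_on {0<..<1} (condQ K x) \<and> strict_mono_on {0<..<1} (condQ K x) \<and>
     (AE w in K x. \<bar>w\<bar> \<le> RR) \<and>
     (\<forall>u\<in>{0..1}. ereal (\<phi> x u) = (SUP y. ereal (u * y - \<psi> x y))) \<and>
     (\<forall>y. ereal (\<psi> x y) = (SUP u\<in>{0..1}. ereal (u * y - \<phi> x u)))"

lemma AE_good: "AE x in mm. good x"
proof -
  have "Measurable.pred borel (\<lambda>z::'a \<times> real. \<bar>snd z\<bar> \<le> RR)" by measurable
  then have "AE x in mm. AE y in K x. \<bar>snd (x, y)\<bar> \<le> RR" using RR(3) AE_nu by blast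
  then have "AE x in mm. AE y in K x. \<bar>y\<bar> \<le> RR" by simp
  then show ?thesis using Q_reg conj unfolding good_def by eventually_elim auto
qed

lemma ex_GG: "\<exists>G\<in>sets borel. (AE x in mm. x \<in> G) \<and> (\<forall>x\<in>G. good x)"
proof -
  from AE_good obtain N where N: "{x \<in> space mm. \<not> good x} \<subseteq> N" "emeasure mm N = 0" "N \<in> sets mm"
    by (rule AE_E)
  have "AE x in mm. x \<in> UNIV - N" by (rule AE_I'[of N]) (use N in auto)
  moreover have "UNIV - N \<in> sets borel" using N(3) by auto
  moreover have "\<forall>x\<in>UNIV - N. good x" using N(1) by auto
  ultimately show ?thesis by blast
qed

definition GG :: "'a set" where "GG = (SOME G. G \<in> sets borel \<and> (AE x in mm. x \<in> G) \<and> (\<forall>x\<in>G. good x))"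

lemma GG: "GG \<in> sets borel" "AE x in mm. x \<in> GG" "\<And>x. x \<in> GG \<Longrightarrow> good x"
  using someI_ex[OF ex_GG[unfolded Bex_def]] unfolding GG_def[symmetric] by auto

lemma GG_meas[measurable]: "GG \<in> sets borel" by (rule GG(1))

lemma good_facts: assumes "good x"
  shows "continuous_on {0<..<1} (condQ K x)" "strict_mono_on {0<..<1} (condQ K x)"
    "AE w in K x. \<bar>w\<bar> \<le> RR"
    "\<forall>u\<in>{0..1}. ereal (\<phi> x u) = (SUP y. ereal (u * y - \<psi> x y))"
    "\<forall>y. ereal (\<psi> x y) = (SUP u\<in>{0..1}. ereal (u * y - \<phi> x u))"
  using assms unfolding good_def by auto

lemma distr_UU: "distr M borel UU = unif01"
proof -
  have "distr M borel UU = distr (distr M borel (\<lambda>\<omega>. (X \<omega>, UU \<omega>))) borel snd"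
    by (subst distr_distr) (auto simp: comp_def snd_borel)
  also have "\<dots> = distr (mm \<Otimes>\<^sub>M unif01) borel snd" by (simp add: law_XU)
  also have "\<dots> = unif01"
  proof (rule measure_eqI)
    show "sets (distr (mm \<Otimes>\<^sub>M unif01) borel snd) = sets unif01" by (simp add: sets_unif01)
    fix A assume "A \<in> sets (distr (mm \<Otimes>\<^sub>M unif01) borel snd)"
    then have A: "A \<in> sets borel" by simp
    interpret u: prob_space unif01 by (rule unif01_prob)
    interpret mm: prob_space mm by (rule prob_mm)
    interpret pair_sigma_finite mm unif01 ..
    have "snd -` A \<inter> space (mm \<Otimes>\<^sub>M unif01) = UNIV \<times> A"
      by (auto simp: space_pair_measure sets_eq_imp_space_eq[OF sets_unif01])
    moreover have "snd \<in> mm \<Otimes>\<^sub>M unif01 \<rightarrow>\<^sub>M borel"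
      using measurable_snd[of mm unif01] sets_unif01 by (simp cong: measurable_cong_sets)
    ultimately have "emeasure (distr (mm \<Otimes>\<^sub>M unif01) borel snd) A = emeasure (mm \<Otimes>\<^sub>M unif01) (UNIV \<times> A)"
      using A by (simp add: emeasure_distr)
    also have "\<dots> = emeasure mm UNIV * emeasure unif01 A"
    proof (rule u.emeasure_pair_measure_Times)
      show "UNIV \<in> sets mm" using sets.top[of mm] by simp
      show "A \<in> sets unif01" using A sets_unif01 by simp
    qed
    also have "\<dots> = emeasure unif01 A" using mm.emeasure_space_1 by simp
    finally show "emeasure (distr (mm \<Otimes>\<^sub>M unif01) borel snd) A = emeasure unif01 A" .
  qed
  finally show ?thesis .
qed

lemma AE_M_basic: "AE \<omega> in M. X \<omega> \<in> GG \<and> \<bar>Y \<omega>\<bar> \<le> RR \<and> 0 < UU \<omega> \<and> UU \<omega> < 1 \<and>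
    Y \<omega> = condQ K (X \<omega>) (UU \<omega>)"
proof -
  have 1: "AE \<omega> in M. X \<omega> \<in> GG" using GG(2) by (subst (asm) AE_distr_iff) auto
  have 2: "AE \<omega> in M. \<bar>Y \<omega>\<bar> \<le> RR" using RR(3) by (subst (asm) AE_distr_iff) auto
  have 3: "AE \<omega> in M. 0 < UU \<omega> \<and> UU \<omega> < 1" using unif_AE unfolding distr_UU[symmetric]
    by (subst (asm) AE_distr_iff) auto
  from 1 2 3 show ?thesis
  proof eventually_elim
    case (elim \<omega>)
    note g = good_facts[OF GG(3)[OF elim(1)]]
    have "condQ K (X \<omega>) (condF K (X \<omega>) (Y \<omega>)) = Y \<omega>"
      by (rule condQ_condF[where K=K and x="X \<omega>", OF K_prob K_sets g(1,2)]) (use elim in \<open>auto simp: UU_def FF_def\<close>)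
    then show ?case using elim by (auto simp: UU_def FF_def)
  qed
qed


lemma Kfst_meas: "(\<lambda>p. K (fst p)) \<in> (borel::('a \<times> real) measure) \<rightarrow>\<^sub>M subprob_algebra borel"
  by (rule measurable_compose[OF fst_borel K_sub])

lemma psi0m: "(\<lambda>p. psi0 (K (fst p)) (snd p)) \<in> borel_measurable (borel::('a \<times> real) measure)"
proof -
  have sf[measurable]: "(\<lambda>q::('a \<times> real) \<times> real. snd (fst q)) \<in> borel_measurable ((borel::('a \<times> real) measure) \<Otimes>\<^sub>M (borel::real measure))"
    by (rule measurable_compose[OF measurable_fst snd_borel])
  have "(\<lambda>(p, w). ennreal (max 0 (snd p - w))) \<in> borel_measurable ((borel::('a \<times> real) measure) \<Otimes>\<^sub>M (borel::real measure))"
    unfolding case_prod_beta by measurable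
  then have "(\<lambda>p. \<integral>\<^sup>+w. ennreal (max 0 (snd p - w)) \<partial>K (fst p)) \<in> borel_measurable (borel::('a \<times> real) measure)"
    by (rule nn_integral_measurable_subprob_algebra2[where f="\<lambda>p w. ennreal (max 0 (snd p - w))", OF _ Kfst_meas])
  then show ?thesis unfolding psi0_def by measurable
qed

lemma pair_const_meas: "(\<lambda>p::'a \<times> real. (fst p, c::real)) \<in> (borel::('a \<times> real) measure) \<rightarrow>\<^sub>M (borel::('a \<times> real) measure)"
  using fst_borel by measurable

lemma phi0m: "(\<lambda>p. phi0 RR (K (fst p)) (snd p)) \<in> borel_measurable (borel::('a \<times> real) measure)"
  unfolding phi0_def
proof (rule borel_measurable_cSUP[OF countable_DD])
  fix i
  have "(\<lambda>p. psi0 (K (fst (fst p, i))) (snd (fst p, i))) \<in> borel_measurable (borel::('a \<times> real) measure)"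
    by (rule measurable_compose[OF pair_const_meas psi0m])
  then have "(\<lambda>p. psi0 (K (fst p)) i) \<in> borel_measurable (borel::('a \<times> real) measure)" by simp
  then show "(\<lambda>p. snd p * i - psi0 (K (fst p)) i) \<in> borel_measurable (borel::('a \<times> real) measure)"
    using snd_borel by measurable
qed (rule phi0_bdd[OF RR(1)])

lemma psi1m: "(\<lambda>p. psi1 RR (K (fst p)) (snd p)) \<in> borel_measurable (borel::('a \<times> real) measure)"
  unfolding psi1_def
proof (rule borel_measurable_cSUP[OF countable_EE])
  fix i
  have "(\<lambda>p. phi0 RR (K (fst (fst p, i))) (snd (fst p, i))) \<in> borel_measurable (borel::('a \<times> real) measure)"
    by (rule measurable_compose[OF pair_const_meas phi0m])
  then have "(\<lambda>p. phi0 RR (K (fst p)) i) \<in> borel_measurable (borel::('a \<times> real) measure)" by simp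
  then show "(\<lambda>p. i * snd p - phi0 RR (K (fst p)) i) \<in> borel_measurable (borel::('a \<times> real) measure)"
    using snd_borel by measurable
qed (rule psi1_bdd[OF RR(1)])

lemma sets_mmU: "sets (mm \<Otimes>\<^sub>M unif01) = sets (borel::('a \<times> real) measure)"
proof -
  have bp: "(borel::'a measure) \<Otimes>\<^sub>M (borel::real measure) = borel" by (rule borel_prod)
  have "sets (mm \<Otimes>\<^sub>M unif01) = sets ((borel::'a measure) \<Otimes>\<^sub>M (borel::real measure))"
    by (rule sets_pair_measure_cong[OF sets_mm sets_unif01])
  also have "\<dots> = sets (borel::('a \<times> real) measure)" by (simp only: bp)
  finally show ?thesis .
qed

lemma phim: "(\<lambda>p. \<phi> (fst p) (snd p)) \<in> borel_measurable (borel::('a \<times> real) measure)"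
proof -
  have "integrable (mm \<Otimes>\<^sub>M unif01) (\<lambda>(x, u). \<phi> x u)"
    using dual_opt by (simp add: dual_optimal_def dual_feasible_def)
  then have "(\<lambda>(x, u). \<phi> x u) \<in> borel_measurable (mm \<Otimes>\<^sub>M unif01)" by blast
  then have "(\<lambda>(x, u). \<phi> x u) \<in> borel_measurable (borel::('a \<times> real) measure)"
    using sets_mmU by (simp cong: measurable_cong_sets)
  moreover have "(\<lambda>p. \<phi> (fst p) (snd p)) = (\<lambda>(x, u). \<phi> x u)" by (rule ext) (simp add: case_prod_beta)
  ultimately show ?thesis by simp
qed

lemma psim: "(\<lambda>p. \<psi> (fst p) (snd p)) \<in> borel_measurable (borel::('a \<times> real) measure)"
proof -
  have "integrable nu (\<lambda>(x, y). \<psi> x y)"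
    using dual_opt by (simp add: dual_optimal_def dual_feasible_def)
  then have "(\<lambda>(x, y). \<psi> x y) \<in> borel_measurable nu" by blast
  then have "(\<lambda>(x, u). \<psi> x u) \<in> borel_measurable (borel::('a \<times> real) measure)"
    by (simp cong: measurable_cong_sets)
  moreover have "(\<lambda>p. \<psi> (fst p) (snd p)) = (\<lambda>(x, u). \<psi> x u)" by (rule ext) (simp add: case_prod_beta)
  ultimately show ?thesis by simp
qed

lemma XU_meas[measurable]: "(\<lambda>\<omega>. (X \<omega>, UU \<omega>)) \<in> M \<rightarrow>\<^sub>M borel" by measurable

lemma int_mmU: fixes f :: "'a \<Rightarrow> real \<Rightarrow> real" assumes f: "(\<lambda>p. f (fst p) (snd p)) \<in> borel_measurable (borel::('a \<times> real) measure)"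
  shows "(\<integral>(x, u). f x u \<partial>(mm \<Otimes>\<^sub>M unif01)) = (\<integral>\<omega>. f (X \<omega>) (UU \<omega>) \<partial>M)"
  unfolding law_XU[symmetric] case_prod_beta by (subst integral_distr[OF XU_meas f]) simp

lemma integrable_mmU: fixes f :: "'a \<Rightarrow> real \<Rightarrow> real" assumes f: "(\<lambda>p. f (fst p) (snd p)) \<in> borel_measurable (borel::('a \<times> real) measure)"
  shows "integrable (mm \<Otimes>\<^sub>M unif01) (\<lambda>(x, u). f x u) \<longleftrightarrow> integrable M (\<lambda>\<omega>. f (X \<omega>) (UU \<omega>))"
  unfolding law_XU[symmetric] case_prod_beta by (subst integrable_distr_eq[OF XU_meas f]) simp

lemma int_nu: fixes f :: "'a \<Rightarrow> real \<Rightarrow> real" assumes f: "(\<lambda>p. f (fst p) (snd p)) \<in> borel_measurable (borel::('a \<times> real) measure)"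
  shows "(\<integral>(x, y). f x y \<partial>nu) = (\<integral>\<omega>. f (X \<omega>) (Y \<omega>) \<partial>M)"
  unfolding case_prod_beta by (subst integral_distr[OF XY_meas f]) simp

lemma integrable_nu: fixes f :: "'a \<Rightarrow> real \<Rightarrow> real" assumes f: "(\<lambda>p. f (fst p) (snd p)) \<in> borel_measurable (borel::('a \<times> real) measure)"
  shows "integrable nu (\<lambda>(x, y). f x y) \<longleftrightarrow> integrable M (\<lambda>\<omega>. f (X \<omega>) (Y \<omega>))"
  unfolding case_prod_beta by (subst integrable_distr_eq[OF XY_meas f]) simp


lemma good_fiber: assumes "good x"
  shows "prob_space (K x)" "sets (K x) = sets borel" "continuous_on {0<..<1} (condQ K x)"
    "strict_mono_on {0<..<1} (condQ K x)" "0 \<le> RR" "RR \<in> \<rat>" "AE w in K x. \<bar>w\<bar> \<le> RR"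
  using good_facts[OF assms] K_prob K_sets RR by auto

lemma UY_int: "integrable M (\<lambda>\<omega>. UU \<omega> * Y \<omega>)"
proof (rule integrable_bdd[OF M _ , of _ RR])
  show "(\<lambda>\<omega>. UU \<omega> * Y \<omega>) \<in> borel_measurable M" by measurable
  show "AE \<omega> in M. \<bar>UU \<omega> * Y \<omega>\<bar> \<le> RR" using AE_M_basic
  proof eventually_elim
    case (elim \<omega>)
    have "\<bar>UU \<omega> * Y \<omega>\<bar> = UU \<omega> * \<bar>Y \<omega>\<bar>" using UU_01[of \<omega>] by (simp add: abs_mult)
    also have "\<dots> \<le> 1 * RR" using UU_01[of \<omega>] elim by (intro mult_mono) auto
    finally show ?case by simp
  qed
qed

lemma competitor:
  "dual_feasible nu mm (\<lambda>x u. phi0 RR (K x) u) (\<lambda>x y. psi1 RR (K x) y)"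
  "dual_value nu mm (\<lambda>x u. phi0 RR (K x) u) (\<lambda>x y. psi1 RR (K x) y) = (\<integral>\<omega>. UU \<omega> * Y \<omega> \<partial>M)"
proof -
  have m0: "(\<lambda>\<omega>. phi0 RR (K (X \<omega>)) (UU \<omega>)) \<in> borel_measurable M"
    using measurable_compose[OF XU_meas phi0m] by simp
  have m1: "(\<lambda>\<omega>. psi1 RR (K (X \<omega>)) (Y \<omega>)) \<in> borel_measurable M"
    using measurable_compose[OF XY_meas psi1m] by simp
  have AEg: "AE \<omega> in M. \<bar>phi0 RR (K (X \<omega>)) (UU \<omega>)\<bar> \<le> RR \<and> \<bar>psi1 RR (K (X \<omega>)) (Y \<omega>)\<bar> \<le> 2 * RR \<and>
      phi0 RR (K (X \<omega>)) (UU \<omega>) + psi1 RR (K (X \<omega>)) (Y \<omega>) = UU \<omega> * Y \<omega>"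
    using AE_M_basic
  proof eventually_elim
    case (elim \<omega>)
    note g = good_fiber[OF GG(3)[OF conjunct1[OF elim]]]
    have "\<bar>phi0 RR (K (X \<omega>)) (UU \<omega>)\<bar> \<le> RR"
      by (rule phi0_abs[where K=K and x="X \<omega>", OF g]) (use UU_01[of \<omega>] in auto)
    moreover have "\<bar>psi1 RR (K (X \<omega>)) (Y \<omega>)\<bar> \<le> 2 * RR"
      by (rule psi1_abs[where K=K and x="X \<omega>", OF g]) (use elim in auto)
    moreover have "phi0 RR (K (X \<omega>)) (UU \<omega>) + psi1 RR (K (X \<omega>)) (condQ K (X \<omega>) (UU \<omega>)) = UU \<omega> * condQ K (X \<omega>) (UU \<omega>)"
      by (rule fiber_identity[where K=K and x="X \<omega>", OF g]) (use elim in auto)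
    ultimately show ?case using elim by simp
  qed
  have i0: "integrable M (\<lambda>\<omega>. phi0 RR (K (X \<omega>)) (UU \<omega>))"
    by (rule integrable_bdd[OF M m0, of RR]) (use AEg in \<open>eventually_elim, auto\<close>)
  have i1: "integrable M (\<lambda>\<omega>. psi1 RR (K (X \<omega>)) (Y \<omega>))"
    by (rule integrable_bdd[OF M m1, of "2 * RR"]) (use AEg in \<open>eventually_elim, auto\<close>)
  show "dual_feasible nu mm (\<lambda>x u. phi0 RR (K x) u) (\<lambda>x y. psi1 RR (K x) y)"
    unfolding dual_feasible_def
    using integrable_mmU[OF phi0m] integrable_nu[OF psi1m] i0 i1 feas[OF RR(1)] by simp
  have "dual_value nu mm (\<lambda>x u. phi0 RR (K x) u) (\<lambda>x y. psi1 RR (K x) y) =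
      (\<integral>\<omega>. phi0 RR (K (X \<omega>)) (UU \<omega>) \<partial>M) + (\<integral>\<omega>. psi1 RR (K (X \<omega>)) (Y \<omega>) \<partial>M)"
    unfolding dual_value_def using int_mmU[OF phi0m] int_nu[OF psi1m] by simp
  also have "\<dots> = (\<integral>\<omega>. phi0 RR (K (X \<omega>)) (UU \<omega>) + psi1 RR (K (X \<omega>)) (Y \<omega>) \<partial>M)"
    by (rule Bochner_Integration.integral_add[OF i0 i1, symmetric])
  also have "\<dots> = (\<integral>\<omega>. UU \<omega> * Y \<omega> \<partial>M)"
    by (rule integral_cong_AE) (use AEg m0 m1 in \<open>auto elim: AE_mp\<close>)
  finally show "dual_value nu mm (\<lambda>x u. phi0 RR (K x) u) (\<lambda>x y. psi1 RR (K x) y) = (\<integral>\<omega>. UU \<omega> * Y \<omega> \<partial>M)" .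
qed

lemma phi_int: "integrable M (\<lambda>\<omega>. \<phi> (X \<omega>) (UU \<omega>))" and psi_int: "integrable M (\<lambda>\<omega>. \<psi> (X \<omega>) (Y \<omega>))"
  using dual_opt integrable_mmU[OF phim] integrable_nu[OF psim]
  by (auto simp: dual_optimal_def dual_feasible_def)

lemma feasible_phipsi: "u \<in> {0..1} \<Longrightarrow> u * y \<le> \<phi> x u + \<psi> x y"
  using dual_opt by (auto simp: dual_optimal_def dual_feasible_def)

lemma dual_value_phipsi: "dual_value nu mm \<phi> \<psi> = (\<integral>\<omega>. \<phi> (X \<omega>) (UU \<omega>) \<partial>M) + (\<integral>\<omega>. \<psi> (X \<omega>) (Y \<omega>) \<partial>M)"
  unfolding dual_value_def using int_mmU[OF phim] int_nu[OF psim] by simp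

lemma main_slack: "AE \<omega> in M. \<phi> (X \<omega>) (UU \<omega>) + \<psi> (X \<omega>) (Y \<omega>) = UU \<omega> * Y \<omega>"
  and dual_value_eq: "dual_value nu mm \<phi> \<psi> = (\<integral>\<omega>. UU \<omega> * Y \<omega> \<partial>M)"
proof -
  let ?g = "\<lambda>\<omega>. \<phi> (X \<omega>) (UU \<omega>) + \<psi> (X \<omega>) (Y \<omega>) - UU \<omega> * Y \<omega>"
  have gi: "integrable M ?g"
    by (intro Bochner_Integration.integrable_diff Bochner_Integration.integrable_add phi_int psi_int UY_int)
  have gnn: "0 \<le> ?g \<omega>" for \<omega> using feasible_phipsi[of "UU \<omega>" "Y \<omega>" "X \<omega>"] UU_01[of \<omega>] by simp
  have le: "dual_value nu mm \<phi> \<psi> \<le> (\<integral>\<omega>. UU \<omega> * Y \<omega> \<partial>M)"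
    using dual_opt[unfolded dual_optimal_def, THEN conjunct2, rule_format, OF competitor(1)] competitor(2) by simp
  have int_g: "integral\<^sup>L M ?g = dual_value nu mm \<phi> \<psi> - (\<integral>\<omega>. UU \<omega> * Y \<omega> \<partial>M)"
    unfolding dual_value_phipsi
    by (simp only: Bochner_Integration.integral_diff[OF Bochner_Integration.integrable_add[OF phi_int psi_int] UY_int]
          Bochner_Integration.integral_add[OF phi_int psi_int])
  have "0 \<le> integral\<^sup>L M ?g" using gnn by (intro Bochner_Integration.integral_nonneg) auto
  then have g0: "integral\<^sup>L M ?g = 0" using le int_g by simp
  show "dual_value nu mm \<phi> \<psi> = (\<integral>\<omega>. UU \<omega> * Y \<omega> \<partial>M)" using g0 int_g by simp
  have "AE \<omega> in M. ?g \<omega> = 0" using integral_nonneg_eq_0_iff_AE[OF gi] g0 gnn by simp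
  then show "AE \<omega> in M. \<phi> (X \<omega>) (UU \<omega>) + \<psi> (X \<omega>) (Y \<omega>) = UU \<omega> * Y \<omega>" by eventually_elim simp
qed


lemma slack_fiber: "AE x in mm. AE y in K x. \<phi> x (condF K x y) + \<psi> x y = condF K x y * y"
proof -
  define S where "S z \<longleftrightarrow> \<phi> (fst z) (FF z) + \<psi> (fst z) (snd z) = FF z * snd z" for z :: "'a \<times> real"
  have pc: "(\<lambda>z::'a \<times> real. (fst z, FF z)) \<in> (borel::('a \<times> real) measure) \<rightarrow>\<^sub>M (borel::('a \<times> real) measure)"
    using fst_borel FF_meas by measurable
  have m1: "(\<lambda>z::'a \<times> real. \<phi> (fst z) (FF z)) \<in> borel_measurable borel"
    using measurable_compose[OF pc phim] by simp
  have Sm: "Measurable.pred borel S" unfolding S_def using m1 psim FF_meas snd_borel by measurable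
  have "AE z in nu. S z"
  proof (subst AE_distr_iff[OF XY_meas])
    show "{z \<in> space borel. S z} \<in> sets borel" using Sm by (simp add: Measurable.pred_def)
    show "AE \<omega> in M. S (X \<omega>, Y \<omega>)" using main_slack by (simp add: S_def UU_def)
  qed
  then have "AE x in mm. AE y in K x. S (x, y)" using AE_nu[OF Sm] by simp
  then show ?thesis by (simp add: S_def FF_def)
qed

lemma part1: "AE x in mm. (\<forall>t\<in>{0<..<1}. (\<phi> x has_real_derivative condQ K x t) (at t)) \<and>
                     (\<forall>y. (\<psi> x has_real_derivative condF K x y) (at y))"
  using GG(2) slack_fiber
proof eventually_elim
  case (elim x)
  note g = good_facts[OF GG(3)[OF elim(1)]]
  show ?case by (rule fiber_main[where K=K and x=x, OF K_prob K_sets g(1,2,4,5) elim(2)])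
qed

lemma AE_set_mm: assumes "AE x in mm. P x" shows "\<exists>G\<in>sets borel. (AE x in mm. x \<in> G) \<and> (\<forall>x\<in>G. P x)"
proof -
  from assms obtain N where N: "{x \<in> space mm. \<not> P x} \<subseteq> N" "emeasure mm N = 0" "N \<in> sets mm"
    by (rule AE_E)
  have "AE x in mm. x \<in> UNIV - N" by (rule AE_I'[of N]) (use N in auto)
  moreover have "UNIV - N \<in> sets borel" using N(3) by auto
  moreover have "\<forall>x\<in>UNIV - N. P x" using N(1) by auto
  ultimately show ?thesis by blast
qed

end

lemma deriv_unique:
  fixes f :: "real \<Rightarrow> real"
  assumes d: "(f has_real_derivative d) (at y)" and sg: "\<And>z. f y + u * (z - y) \<le> f z"
  shows "u = d"
proof -
  have lim: "((\<lambda>z. (f z - f y) / (z - y)) \<longlongrightarrow> d) (at y)" using d by (simp add: has_field_derivative_iff)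
  have "((\<lambda>z. (f z - f y) / (z - y)) \<longlongrightarrow> d) (at_right y)" by (rule filterlim_mono[OF lim order_refl at_le]) simp
  moreover have "eventually (\<lambda>z. u \<le> (f z - f y) / (z - y)) (at_right y)"
    unfolding eventually_at_right_field
  proof (intro exI[of _ "y + 1"] conjI allI impI)
    fix z assume z: "y < z" "z < y + 1"
    have "u * (z - y) \<le> f z - f y" using sg[of z] by simp
    then show "u \<le> (f z - f y) / (z - y)" using z by (simp add: pos_le_divide_eq)
  qed simp
  ultimately have 1: "u \<le> d" by (intro tendsto_lowerbound) (auto simp: trivial_limit_at_right_real)
  have "((\<lambda>z. (f z - f y) / (z - y)) \<longlongrightarrow> d) (at_left y)" by (rule filterlim_mono[OF lim order_refl at_le]) simp
  moreover have "eventually (\<lambda>z. (f z - f y) / (z - y) \<le> u) (at_left y)"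
    unfolding eventually_at_left_field
  proof (intro exI[of _ "y - 1"] conjI allI impI)
    fix z assume z: "y - 1 < z" "z < y"
    have "u * (z - y) \<le> f z - f y" using sg[of z] by simp
    then show "(f z - f y) / (z - y) \<le> u" using z by (simp add: neg_divide_le_eq)
  qed simp
  ultimately have 2: "d \<le> u" by (intro tendsto_upperbound) (auto simp: trivial_limit_at_left_real)
  from 1 2 show ?thesis by simp
qed

lemma fst_borelg[measurable]: "fst \<in> (borel::('c::second_countable_topology \<times> 'd::second_countable_topology) measure) \<rightarrow>\<^sub>M borel"
  using measurable_fst[of "borel::'c measure" "borel::'d measure"] unfolding borel_prod .

lemma snd_borelg[measurable]: "snd \<in> (borel::('c::second_countable_topology \<times> 'd::second_countable_topology) measure) \<rightarrow>\<^sub>M borel"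
  using measurable_snd[of "borel::'c measure" "borel::'d measure"] unfolding borel_prod .

context mt5 begin


lemma T_meas[measurable]: "(\<lambda>\<omega>. ((X \<omega>, Y \<omega>), UU \<omega>)) \<in> M \<rightarrow>\<^sub>M borel" by measurable

lemma pi_meas[measurable]: "(\<lambda>w::('a \<times> real) \<times> real. (fst (fst w), snd w)) \<in> borel \<rightarrow>\<^sub>M borel" by measurable

lemma pi_eq: "(\<lambda>((x, y), u). (x, u)) = (\<lambda>w::('a \<times> real) \<times> real. (fst (fst w), snd w))" by auto

lemma uy_eq: "(\<lambda>((x, y), u). u * y) = (\<lambda>w::('a \<times> real) \<times> real. snd w * snd (fst w))" by auto

lemma primal_star: "primal_feasible nu mm (distr M borel (\<lambda>\<omega>. ((X \<omega>, Y \<omega>), UU \<omega>)))"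
  "primal_value (distr M borel (\<lambda>\<omega>. ((X \<omega>, Y \<omega>), UU \<omega>))) = (\<integral>\<omega>. UU \<omega> * Y \<omega> \<partial>M)"
proof -
  let ?T = "\<lambda>\<omega>. ((X \<omega>, Y \<omega>), UU \<omega>)"
  have "distr (distr M borel ?T) borel fst = nu"
    by (subst distr_distr) (auto simp: comp_def)
  moreover have "distr (distr M borel ?T) borel (\<lambda>w. (fst (fst w), snd w)) = mm \<Otimes>\<^sub>M unif01"
    by (subst distr_distr) (auto simp: comp_def law_XU)
  moreover have "prob_space (distr M borel ?T)" using M by (auto intro!: prob_space.prob_space_distr)
  ultimately show "primal_feasible nu mm (distr M borel ?T)"
    unfolding primal_feasible_def pi_eq by simp
  have m: "(\<lambda>w::('a \<times> real) \<times> real. snd w * snd (fst w)) \<in> borel_measurable borel" by measurable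
  show "primal_value (distr M borel ?T) = (\<integral>\<omega>. UU \<omega> * Y \<omega> \<partial>M)"
    unfolding primal_value_def uy_eq by (subst integral_distr[OF T_meas m]) simp
qed

lemma part2:
  assumes opt: "primal_optimal nu mm \<theta>"
  shows "\<exists>U. U \<in> borel_measurable M \<and>
              distr M borel (\<lambda>\<omega>. ((X \<omega>, Y \<omega>), U \<omega>)) = \<theta> \<and>
              (\<forall>V. V \<in> borel_measurable M \<and> distr M borel (\<lambda>\<omega>. ((X \<omega>, Y \<omega>), V \<omega>)) = \<theta>
                   \<longrightarrow> (AE \<omega> in M. V \<omega> = U \<omega>)) \<and>
              distr M borel U = unif01 \<and>
              distr M borel (\<lambda>\<omega>. (X \<omega>, U \<omega>)) = mm \<Otimes>\<^sub>M unif01 \<and>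
              (AE \<omega> in M. U \<omega> = condF K (X \<omega>) (Y \<omega>)) \<and>
              (AE \<omega> in M. U \<omega> \<in> {0<..<1} \<and>
                   (\<phi> (X \<omega>) has_real_derivative Y \<omega>) (at (U \<omega>)) \<and>
                   Y \<omega> = condQ K (X \<omega>) (U \<omega>))"
proof -
  let ?T = "\<lambda>\<omega>. ((X \<omega>, Y \<omega>), UU \<omega>)"
  let ?\<pi> = "\<lambda>w::('a \<times> real) \<times> real. (fst (fst w), snd w)"
  from AE_set_mm[OF part1] obtain G2 where G2: "G2 \<in> sets borel" "AE x in mm. x \<in> G2"
    "\<And>x. x \<in> G2 \<Longrightarrow> (\<forall>t\<in>{0<..<1}. (\<phi> x has_real_derivative condQ K x t) (at t)) \<and>
                     (\<forall>y. (\<psi> x has_real_derivative condF K x y) (at y))" by blast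
  note [measurable] = G2(1)
  have F: "prob_space \<theta>" "sets \<theta> = sets borel" "distr \<theta> borel fst = nu" "distr \<theta> borel ?\<pi> = mm \<Otimes>\<^sub>M unif01"
    using opt unfolding primal_optimal_def primal_feasible_def pi_eq by auto
  have \<pi>m: "?\<pi> \<in> \<theta> \<rightarrow>\<^sub>M borel" using F(2) by (simp cong: measurable_cong_sets)
  have fm: "fst \<in> \<theta> \<rightarrow>\<^sub>M (borel::('a \<times> real) measure)" using F(2) by (simp cong: measurable_cong_sets)
  have vle: "(\<integral>\<omega>. UU \<omega> * Y \<omega> \<partial>M) \<le> primal_value \<theta>"
    using opt primal_star unfolding primal_optimal_def by metis
  have A1: "AE w in \<theta>. 0 \<le> snd w \<and> snd w \<le> 1"
  proof -
    have "AE p in distr M borel (\<lambda>\<omega>. (X \<omega>, UU \<omega>)). 0 \<le> snd p \<and> snd p \<le> 1"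
      by (subst AE_distr_iff) (auto simp: UU_01)
    then have "AE p in distr \<theta> borel ?\<pi>. 0 \<le> snd p \<and> snd p \<le> 1" unfolding F(4) law_XU .
    then show ?thesis by (subst (asm) AE_distr_iff[OF \<pi>m]) auto
  qed
  have A2: "AE w in \<theta>. \<bar>snd (fst w)\<bar> \<le> RR \<and> fst (fst w) \<in> G2"
  proof -
    have "AE \<omega> in M. X \<omega> \<in> G2" using G2(2) by (subst (asm) AE_distr_iff) auto
    then have "AE z in nu. fst z \<in> G2" by (subst AE_distr_iff) auto
    then have "AE z in nu. \<bar>snd z\<bar> \<le> RR \<and> fst z \<in> G2" using RR(3) by eventually_elim auto
    then have "AE z in distr \<theta> borel fst. \<bar>snd z\<bar> \<le> RR \<and> fst z \<in> G2" unfolding F(3) .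
    then show ?thesis by (subst (asm) AE_distr_iff[OF fm]) auto
  qed
  have iphi: "integrable \<theta> (\<lambda>w. \<phi> (fst (fst w)) (snd w))"
  proof -
    have e: "(\<lambda>(x, y). \<phi> x y) = (\<lambda>p. \<phi> (fst p) (snd p))" by auto
    have "integrable (mm \<Otimes>\<^sub>M unif01) (\<lambda>p. \<phi> (fst p) (snd p))"
      using dual_opt unfolding dual_optimal_def dual_feasible_def e by simp
    then show ?thesis unfolding F(4)[symmetric] by (subst (asm) integrable_distr_eq[OF \<pi>m phim]) simp
  qed
  have ipsi: "integrable \<theta> (\<lambda>w. \<psi> (fst (fst w)) (snd (fst w)))"
  proof -
    have e: "(\<lambda>(x, y). \<psi> x y) = (\<lambda>p. \<psi> (fst p) (snd p))" by auto
    have "integrable nu (\<lambda>p. \<psi> (fst p) (snd p))"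
      using dual_opt unfolding dual_optimal_def dual_feasible_def e by simp
    then show ?thesis unfolding F(3)[symmetric] by (subst (asm) integrable_distr_eq[OF fm psim]) simp
  qed
  have muy: "(\<lambda>w::('a \<times> real) \<times> real. snd w * snd (fst w)) \<in> borel_measurable \<theta>"
    using F(2) by (simp cong: measurable_cong_sets)
  have iuy: "integrable \<theta> (\<lambda>w. snd w * snd (fst w))"
  proof (rule integrable_bdd[OF F(1) muy, of RR])
    show "AE w in \<theta>. \<bar>snd w * snd (fst w)\<bar> \<le> RR" using A1 A2
    proof eventually_elim
      case (elim w)
      have "\<bar>snd w * snd (fst w)\<bar> = snd w * \<bar>snd (fst w)\<bar>" using elim by (simp add: abs_mult)
      also have "\<dots> \<le> 1 * RR" using elim by (intro mult_mono) auto
      finally show ?case by simp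
    qed
  qed
  have Iphi: "(\<integral>w. \<phi> (fst (fst w)) (snd w) \<partial>\<theta>) = (\<integral>(x, u). \<phi> x u \<partial>(mm \<Otimes>\<^sub>M unif01))"
    unfolding F(4)[symmetric] case_prod_beta by (subst integral_distr[OF \<pi>m phim]) simp
  have Ipsi: "(\<integral>w. \<psi> (fst (fst w)) (snd (fst w)) \<partial>\<theta>) = (\<integral>(x, y). \<psi> x y \<partial>nu)"
    unfolding F(3)[symmetric] case_prod_beta by (subst integral_distr[OF fm psim]) simp
  let ?h = "\<lambda>w. \<phi> (fst (fst w)) (snd w) + \<psi> (fst (fst w)) (snd (fst w)) - snd w * snd (fst w)"
  have hi: "integrable \<theta> ?h"
    by (intro Bochner_Integration.integrable_diff Bochner_Integration.integrable_add iphi ipsi iuy)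
  have hnn: "AE w in \<theta>. 0 \<le> ?h w" using A1
    by eventually_elim (use feasible_phipsi in auto)
  have "integral\<^sup>L \<theta> ?h = dual_value nu mm \<phi> \<psi> - primal_value \<theta>"
    unfolding dual_value_def primal_value_def uy_eq Iphi[symmetric] Ipsi[symmetric]
    by (simp only: Bochner_Integration.integral_diff[OF Bochner_Integration.integrable_add[OF iphi ipsi] iuy]
          Bochner_Integration.integral_add[OF iphi ipsi])
  then have "integral\<^sup>L \<theta> ?h \<le> 0" using vle dual_value_eq by simp
  moreover have "0 \<le> integral\<^sup>L \<theta> ?h" using hnn by (rule integral_nonneg_AE)
  ultimately have "integral\<^sup>L \<theta> ?h = 0" by simp
  then have h0: "AE w in \<theta>. ?h w = 0" using integral_nonneg_eq_0_iff_AE[OF hi hnn] by simp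
  have A3: "AE w in \<theta>. snd w = FF (fst w)" using h0 A1 A2
  proof eventually_elim
    case (elim w)
    define x where "x = fst (fst w)"
    define y where "y = snd (fst w)"
    define u where "u = snd w"
    have u01: "u \<in> {0..1}" using elim by (simp add: u_def)
    have sg: "\<psi> x y + u * (z - y) \<le> \<psi> x z" for z
      using feasible_phipsi[OF u01, of z x] elim(1) by (simp add: x_def y_def u_def algebra_simps)
    have "x \<in> G2" using elim by (simp add: x_def)
    then have "(\<psi> x has_real_derivative condF K x y) (at y)" using G2(3) by blast
    then have "u = condF K x y" by (rule deriv_unique) (rule sg)
    then show ?case by (simp add: FF_def x_def y_def u_def)
  qed
  have Am: "Measurable.pred borel (\<lambda>w::('a \<times> real) \<times> real. snd w = FF (fst w))" by measurable
  have eq\<theta>: "\<theta> = distr M borel ?T"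
  proof -
    have "\<theta> = distr \<theta> borel (\<lambda>w. w)" using distr_id2[of borel \<theta>] F(2) by simp
    also have "\<dots> = distr \<theta> borel (\<lambda>w. (fst w, FF (fst w)))"
    proof (rule distr_cong_AE)
      show "AE w in \<theta>. w = (fst w, FF (fst w))" using A3 by eventually_elim (simp add: prod_eq_iff)
      show "(\<lambda>w. w) \<in> \<theta> \<rightarrow>\<^sub>M borel" using F(2) by (simp cong: measurable_cong_sets)
      show "(\<lambda>w. (fst w, FF (fst w))) \<in> \<theta> \<rightarrow>\<^sub>M borel" using F(2) by (simp cong: measurable_cong_sets)
    qed auto
    also have "\<dots> = distr (distr \<theta> borel fst) borel (\<lambda>p. (p, FF p))"
      by (subst distr_distr) (auto simp: comp_def fm)
    also have "\<dots> = distr M borel ?T"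
      unfolding F(3) by (subst distr_distr) (auto simp: comp_def UU_def)
    finally show ?thesis .
  qed
  show ?thesis
  proof (intro exI[of _ UU] conjI allI impI)
    show "UU \<in> borel_measurable M" by (rule UU_meas)
    show "distr M borel ?T = \<theta>" using eq\<theta> by simp
    show "distr M borel UU = unif01" by (rule distr_UU)
    show "distr M borel (\<lambda>\<omega>. (X \<omega>, UU \<omega>)) = mm \<Otimes>\<^sub>M unif01" by (rule law_XU)
    show "AE \<omega> in M. UU \<omega> = condF K (X \<omega>) (Y \<omega>)" by (simp add: UU_def FF_def)
  next
    fix V assume V: "V \<in> borel_measurable M \<and> distr M borel (\<lambda>\<omega>. ((X \<omega>, Y \<omega>), V \<omega>)) = \<theta>"
    have Vm0[measurable]: "V \<in> borel_measurable M" using V by simp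
    have Vm: "(\<lambda>\<omega>. ((X \<omega>, Y \<omega>), V \<omega>)) \<in> M \<rightarrow>\<^sub>M borel" by measurable
    have "AE w in distr M borel (\<lambda>\<omega>. ((X \<omega>, Y \<omega>), V \<omega>)). snd w = FF (fst w)" using A3 V by (simp only:)
    then have "AE \<omega> in M. V \<omega> = FF (X \<omega>, Y \<omega>)"
      by (subst (asm) AE_distr_iff[OF Vm]) (use Am in \<open>auto simp: Measurable.pred_def\<close>)
    then show "AE \<omega> in M. V \<omega> = UU \<omega>" by (simp add: UU_def)
  next
    have "AE \<omega> in M. X \<omega> \<in> G2" using G2(2) by (subst (asm) AE_distr_iff) auto
    then show "AE \<omega> in M. UU \<omega> \<in> {0<..<1} \<and> (\<phi> (X \<omega>) has_real_derivative Y \<omega>) (at (UU \<omega>)) \<and>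
                   Y \<omega> = condQ K (X \<omega>) (UU \<omega>)"
      using AE_M_basic
    proof eventually_elim
      case (elim \<omega>)
      then have "(\<phi> (X \<omega>) has_real_derivative condQ K (X \<omega>) (UU \<omega>)) (at (UU \<omega>))" using G2(3) by auto
      then show ?case using elim by auto
    qed
  qed
qed

end

theorem mainTheorem5:
  fixes M :: "'w measure"
    and X :: "'w \<Rightarrow> 'a::euclidean_space"
    and Y :: "'w \<Rightarrow> real"
    and K :: "'a \<Rightarrow> real measure"
    and \<phi> \<psi> :: "'a \<Rightarrow> real \<Rightarrow> real"
  defines "\<nu> \<equiv> distr M borel (\<lambda>\<omega>. (X \<omega>, Y \<omega>))"
    and "m \<equiv> distr M borel X"
  assumes M: "prob_space M" and nonat: "nonatomic M"
    and X: "X \<in> borel_measurable M" and Y: "Y \<in> borel_measurable M"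
    and compact_supp: "\<exists>C. compact C \<and> (AE z in \<nu>. z \<in> C)"
    and K_kernel: "K \<in> borel \<rightarrow>\<^sub>M prob_algebra borel"
    and disint: "\<forall>A\<in>sets borel. \<forall>B\<in>sets borel.
                   measure \<nu> (A \<times> B) = (\<integral>x. indicator A x * measure (K x) B \<partial>m)"
    and Q_reg: "AE x in m. continuous_on {0<..<1} (condQ K x) \<and> strict_mono_on {0<..<1} (condQ K x)"
    and no_hyperplane: "\<forall>\<alpha> (\<beta>::'a). measure M {\<omega>\<in>space M. Y \<omega> = \<alpha> + \<beta> \<bullet> X \<omega>} = 0"
    and dual_opt: "dual_optimal \<nu> m \<phi> \<psi>"
    and conj: "AE x in m.
        (\<forall>u\<in>{0..1}. ereal (\<phi> x u) = (SUP y. ereal (u * y - \<psi> x y))) \<and>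
        (\<forall>y. ereal (\<psi> x y) = (SUP u\<in>{0..1}. ereal (u * y - \<phi> x u)))"
  shows "(AE x in m. (\<forall>t\<in>{0<..<1}. (\<phi> x has_real_derivative condQ K x t) (at t)) \<and>
                     (\<forall>y. (\<psi> x has_real_derivative condF K x y) (at y)))
    \<and> (\<forall>\<theta>. primal_optimal \<nu> m \<theta> \<longrightarrow>
         (\<exists>U. U \<in> borel_measurable M \<and>
              distr M borel (\<lambda>\<omega>. ((X \<omega>, Y \<omega>), U \<omega>)) = \<theta> \<and>
              (\<forall>V. V \<in> borel_measurable M \<and> distr M borel (\<lambda>\<omega>. ((X \<omega>, Y \<omega>), V \<omega>)) = \<theta>
                   \<longrightarrow> (AE \<omega> in M. V \<omega> = U \<omega>)) \<and>
              distr M borel U = unif01 \<and>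
              distr M borel (\<lambda>\<omega>. (X \<omega>, U \<omega>)) = m \<Otimes>\<^sub>M unif01 \<and>
              (AE \<omega> in M. U \<omega> = condF K (X \<omega>) (Y \<omega>)) \<and>
              (AE \<omega> in M. U \<omega> \<in> {0<..<1} \<and>
                   (\<phi> (X \<omega>) has_real_derivative Y \<omega>) (at (U \<omega>)) \<and>
                   Y \<omega> = condQ K (X \<omega>) (U \<omega>))))"
  proof -
  interpret mt5 M X Y K \<phi> \<psi>
    by (rule mt5.intro[OF M X Y compact_supp[unfolded \<nu>_def] K_kernel disint[unfolded \<nu>_def m_def]
          Q_reg[unfolded m_def] dual_opt[unfolded \<nu>_def m_def] conj[unfolded m_def]])
  show ?thesis unfolding \<nu>_def m_def using part1 part2 by blast
qed

end
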